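(* Let $\mathbb{E}$ be a finitely complete category, $\Sigma$ a fibrational class of split epimorphisms, and suppose $\mathbb{E}$ is a $\Sigma$-Mal'tsev category. Let $d_0,d_1\colon X_1\rightrightarrows X_0$, $s_0\colon X_0\to X_1$ be a reflexive graph. The following are equivalent: (1) the graph underlies a $\Sigma$-groupoid; (2) the kernel relation $R[d_0]$ is a $\Sigma$-relation and $[R[d_0],R[d_1]]=0$. Moreover, a reflexive relation $S$ on $X$ (with first projection $d_0\colon S\to X$) is a $\Sigma$-equivalence relation if and only if the kernel relation $R[d_0]$ of $d_0\colon S\to X$ is a $\Sigma$-relation.
   Context: A split epimorphism is a pair $(f,s)$ with $fs=1$. A class $\Sigma$ of split epimorphisms is fibrational if it contains all split epimorphisms $(f,s)$ with $f$ invertible and is stable under pullback along any morphism. A pair of morphisms with common codomain $Z$ is jointly extremally epic if it factors jointly through no non-invertible monomorphism into $Z$. $\mathbb{E}$ is $\Sigma$-Mal'tsev if for every split epimorphism $(f,s)\colon X\rightleftarrows Y$ in $\Sigma$ and every split epimorphism $(g,t)$ with $g\colon Y'\to Y$, letting $X'=Y'\times_YX$, $s'=(1_{Y'},sg)$, $\bar t=(tf,1_X)$, the pair $(s',\bar t)$ is jointly extremally epic. A $\Sigma$-relation is a reflexive relation $(d_0,d_1)\colon S\rightarrowtail X\times X$ with reflexivity $s_0$ such that $(d_0,s_0)\in\Sigma$; a $\Sigma$-equivalence relation is an equivalence relation which is a $\Sigma$-relation; a $\Sigma$-groupoid is an internal groupoid whose underlying reflexive graph $(d_0,d_1,s_0)$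 has $(d_0,s_0)\in\Sigma$. The kernel relation $R[f]$ of $f\colon A\to B$ is $A\times_BA$ with its two projections and the diagonal. For reflexive relations $R,S$ on $X$, $R\times_XS$ is the pullback of $d_0^S$ along $d_1^R$ (elements $xRySz$), $\sigma_0^R\colon R\to R\times_XS$, $xRy\mapsto xRySy$, and $\sigma_0^S\colon S\to R\times_XS$, $ySz\mapsto yRySz$. $[R,S]=0$ means there is a morphism $p\colon R\times_XS\to X$ with $p\sigma_0^R=d_0^R$ and $p\sigma_0^S=d_1^S$. *)

theory Defs
  imports Main
begin

text \<open>A category whose objects are all elements of type 'o and whose morphisms are all
elements of type 'm.  Cmp C g f is the composite "g after f" (defined when Cod f = Dom g).\<close>

record ('o, 'm) cat =
  Dom :: "'m \<Rightarrow> 'o"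
  Cod :: "'m \<Rightarrow> 'o"
  Idm :: "'o \<Rightarrow> 'm"
  Cmp :: "'m \<Rightarrow> 'm \<Rightarrow> 'm"

definition hom :: "('o, 'm) cat \<Rightarrow> 'm \<Rightarrow> 'o \<Rightarrow> 'o \<Rightarrow> bool" where
  "hom C f X Y \<longleftrightarrow> Dom C f = X \<and> Cod C f = Y"

definition category :: "('o, 'm) cat \<Rightarrow> bool" where
  "category C \<longleftrightarrow>
     (\<forall>X. hom C (Idm C X) X X) \<and>
     (\<forall>f g. Cod C f = Dom C g \<longrightarrow> hom C (Cmp C g f) (Dom C f) (Cod C g)) \<and>
     (\<forall>f. Cmp C f (Idm C (Dom C f)) = f \<and> Cmp C (Idm C (Cod C f)) f = f) \<and>
     (\<forall>f g h. Cod C f = Dom C g \<and> Cod C g = Dom C h \<longrightarrow>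
        Cmp C h (Cmp C g f) = Cmp C (Cmp C h g) f)"

definition iso :: "('o, 'm) cat \<Rightarrow> 'm \<Rightarrow> bool" where
  "iso C f \<longleftrightarrow> (\<exists>g. hom C g (Cod C f) (Dom C f) \<and>
     Cmp C g f = Idm C (Dom C f) \<and> Cmp C f g = Idm C (Cod C f))"

definition mono :: "('o, 'm) cat \<Rightarrow> 'm \<Rightarrow> bool" where
  "mono C m \<longleftrightarrow> (\<forall>a b. Cod C a = Dom C m \<and> Cod C b = Dom C m \<and> Dom C a = Dom C b \<and>
     Cmp C m a = Cmp C m b \<longrightarrow> a = b)"

definition is_pullback :: "('o, 'm) cat \<Rightarrow> 'm \<Rightarrow> 'm \<Rightarrow> 'o \<Rightarrow> 'm \<Rightarrow> 'm \<Rightarrow> bool" where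
  "is_pullback C f g P p q \<longleftrightarrow>
     Cod C f = Cod C g \<and> hom C p P (Dom C f) \<and> hom C q P (Dom C g) \<and>
     Cmp C f p = Cmp C g q \<and>
     (\<forall>W a b. hom C a W (Dom C f) \<and> hom C b W (Dom C g) \<and> Cmp C f a = Cmp C g b \<longrightarrow>
        (\<exists>!u. hom C u W P \<and> Cmp C p u = a \<and> Cmp C q u = b))"

definition is_terminal :: "('o, 'm) cat \<Rightarrow> 'o \<Rightarrow> bool" where
  "is_terminal C T \<longleftrightarrow> (\<forall>X. \<exists>!u. hom C u X T)"

definition finitely_complete :: "('o, 'm) cat \<Rightarrow> bool" where
  "finitely_complete C \<longleftrightarrow> (\<exists>T. is_terminal C T) \<and>
     (\<forall>f g. Cod C f = Cod C g \<longrightarrow> (\<exists>P p q. is_pullback C f g P p q))"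

definition is_product :: "('o, 'm) cat \<Rightarrow> 'o \<Rightarrow> 'o \<Rightarrow> 'o \<Rightarrow> 'm \<Rightarrow> 'm \<Rightarrow> bool" where
  "is_product C X Y P p q \<longleftrightarrow> hom C p P X \<and> hom C q P Y \<and>
     (\<forall>W a b. hom C a W X \<and> hom C b W Y \<longrightarrow>
        (\<exists>!u. hom C u W P \<and> Cmp C p u = a \<and> Cmp C q u = b))"

definition split_epi :: "('o, 'm) cat \<Rightarrow> 'm \<Rightarrow> 'm \<Rightarrow> bool" where
  "split_epi C f s \<longleftrightarrow> hom C s (Cod C f) (Dom C f) \<and> Cmp C f s = Idm C (Cod C f)"

definition fibrational :: "('o, 'm) cat \<Rightarrow> ('m \<times> 'm) set \<Rightarrow> bool" where
  "fibrational C Sig \<longleftrightarrow>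
     (\<forall>f s. (f, s) \<in> Sig \<longrightarrow> split_epi C f s) \<and>
     (\<forall>f s. split_epi C f s \<and> iso C f \<longrightarrow> (f, s) \<in> Sig) \<and>
     (\<forall>f s h P f' h' s'. (f, s) \<in> Sig \<and> Cod C h = Cod C f \<and> is_pullback C h f P f' h' \<and>
        hom C s' (Dom C h) P \<and> Cmp C f' s' = Idm C (Dom C h) \<and> Cmp C h' s' = Cmp C s h
        \<longrightarrow> (f', s') \<in> Sig)"

definition jointly_extremally_epic :: "('o, 'm) cat \<Rightarrow> 'm \<Rightarrow> 'm \<Rightarrow> 'o \<Rightarrow> bool" where
  "jointly_extremally_epic C a b Z \<longleftrightarrow> Cod C a = Z \<and> Cod C b = Z \<and>
     (\<forall>m a' b'. mono C m \<and> Cod C m = Z \<and> hom C a' (Dom C a) (Dom C m) \<and>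
        hom C b' (Dom C b) (Dom C m) \<and> Cmp C m a' = a \<and> Cmp C m b' = b \<longrightarrow> iso C m)"

definition sigma_maltsev :: "('o, 'm) cat \<Rightarrow> ('m \<times> 'm) set \<Rightarrow> bool" where
  "sigma_maltsev C Sig \<longleftrightarrow>
     (\<forall>f s g t X' f' g' s' tb.
        (f, s) \<in> Sig \<and> split_epi C g t \<and> Cod C g = Cod C f \<and> is_pullback C g f X' f' g' \<and>
        hom C s' (Dom C g) X' \<and> Cmp C f' s' = Idm C (Dom C g) \<and> Cmp C g' s' = Cmp C s g \<and>
        hom C tb (Dom C f) X' \<and> Cmp C f' tb = Cmp C t f \<and> Cmp C g' tb = Idm C (Dom C f)
        \<longrightarrow> jointly_extremally_epic C s' tb X')"

definition refl_graph :: "('o, 'm) cat \<Rightarrow> 'o \<Rightarrow> 'o \<Rightarrow> 'm \<Rightarrow> 'm \<Rightarrow> 'm \<Rightarrow> bool" where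
  "refl_graph C X0 X1 d0 d1 s0 \<longleftrightarrow> hom C d0 X1 X0 \<and> hom C d1 X1 X0 \<and> hom C s0 X0 X1 \<and>
     Cmp C d0 s0 = Idm C X0 \<and> Cmp C d1 s0 = Idm C X0"

definition refl_rel :: "('o, 'm) cat \<Rightarrow> 'o \<Rightarrow> 'o \<Rightarrow> 'm \<Rightarrow> 'm \<Rightarrow> 'm \<Rightarrow> bool" where
  "refl_rel C X S d0 d1 s0 \<longleftrightarrow> refl_graph C X S d0 d1 s0 \<and>
     (\<forall>P p q m. is_product C X X P p q \<and> hom C m S P \<and> Cmp C p m = d0 \<and> Cmp C q m = d1
        \<longrightarrow> mono C m)"

definition sigma_rel :: "('o, 'm) cat \<Rightarrow> ('m \<times> 'm) set \<Rightarrow> 'o \<Rightarrow> 'o \<Rightarrow> 'm \<Rightarrow> 'm \<Rightarrow> 'm \<Rightarrow> bool" where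
  "sigma_rel C Sig X S d0 d1 s0 \<longleftrightarrow> refl_rel C X S d0 d1 s0 \<and> (d0, s0) \<in> Sig"

text \<open>Equivalence relation: reflexive, symmetric, transitive (S \<times>_X S is the pullback of
  d0 along d1, elements xSySz).\<close>
definition equiv_rel :: "('o, 'm) cat \<Rightarrow> 'o \<Rightarrow> 'o \<Rightarrow> 'm \<Rightarrow> 'm \<Rightarrow> 'm \<Rightarrow> bool" where
  "equiv_rel C X S d0 d1 s0 \<longleftrightarrow> refl_rel C X S d0 d1 s0 \<and>
     (\<exists>\<sigma>. hom C \<sigma> S S \<and> Cmp C d0 \<sigma> = d1 \<and> Cmp C d1 \<sigma> = d0) \<and>
     (\<forall>P p q. is_pullback C d1 d0 P p q \<longrightarrow>
        (\<exists>\<tau>. hom C \<tau> P S \<and> Cmp C d0 \<tau> = Cmp C d0 p \<and> Cmp C d1 \<tau> = Cmp C d1 q))"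

definition sigma_equiv_rel :: "('o, 'm) cat \<Rightarrow> ('m \<times> 'm) set \<Rightarrow> 'o \<Rightarrow> 'o \<Rightarrow> 'm \<Rightarrow> 'm \<Rightarrow> 'm \<Rightarrow> bool" where
  "sigma_equiv_rel C Sig X S d0 d1 s0 \<longleftrightarrow> equiv_rel C X S d0 d1 s0 \<and> (d0, s0) \<in> Sig"

definition kernel_rel :: "('o, 'm) cat \<Rightarrow> 'm \<Rightarrow> 'o \<Rightarrow> 'm \<Rightarrow> 'm \<Rightarrow> 'm \<Rightarrow> bool" where
  "kernel_rel C f K k0 k1 \<delta> \<longleftrightarrow> is_pullback C f f K k0 k1 \<and> hom C \<delta> (Dom C f) K \<and>
     Cmp C k0 \<delta> = Idm C (Dom C f) \<and> Cmp C k1 \<delta> = Idm C (Dom C f)"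

definition kernel_is_sigma_rel :: "('o, 'm) cat \<Rightarrow> ('m \<times> 'm) set \<Rightarrow> 'm \<Rightarrow> bool" where
  "kernel_is_sigma_rel C Sig f \<longleftrightarrow>
     (\<forall>K k0 k1 \<delta>. kernel_rel C f K k0 k1 \<delta> \<longrightarrow> sigma_rel C Sig (Dom C f) K k0 k1 \<delta>)"

text \<open>[R, S] = 0 for reflexive relations R = (R, r0, r1, rs), S = (S, t0, t1, ts) on X.
  R \<times>_X S is the pullback of t0 along r1 (elements xRySz).\<close>
definition commutator_zero :: "('o, 'm) cat \<Rightarrow> 'o \<Rightarrow> 'o \<Rightarrow> 'm \<Rightarrow> 'm \<Rightarrow> 'm \<Rightarrow>
    'o \<Rightarrow> 'm \<Rightarrow> 'm \<Rightarrow> 'm \<Rightarrow> bool" where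
  "commutator_zero C X R r0 r1 rs S t0 t1 ts \<longleftrightarrow>
     (\<forall>P pR pS \<sigma>R \<sigma>S. is_pullback C r1 t0 P pR pS \<and>
        hom C \<sigma>R R P \<and> Cmp C pR \<sigma>R = Idm C R \<and> Cmp C pS \<sigma>R = Cmp C ts r1 \<and>
        hom C \<sigma>S S P \<and> Cmp C pR \<sigma>S = Cmp C rs t0 \<and> Cmp C pS \<sigma>S = Idm C S \<longrightarrow>
        (\<exists>p. hom C p P X \<and> Cmp C p \<sigma>R = r0 \<and> Cmp C p \<sigma>S = t1))"

definition kernels_commute :: "('o, 'm) cat \<Rightarrow> 'm \<Rightarrow> 'm \<Rightarrow> bool" where
  "kernels_commute C f g \<longleftrightarrow>
     (\<forall>K k0 k1 \<delta> L l0 l1 \<epsilon>. kernel_rel C f K k0 k1 \<delta> \<and> kernel_rel C g L l0 l1 \<epsilon> \<longrightarrow>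
        commutator_zero C (Dom C f) K k0 k1 \<delta> L l0 l1 \<epsilon>)"

text \<open>Internal groupoid structure on a reflexive graph: X1 \<times>_X0 X1 is the pullback of
  d0 along d1 (composable pairs (f, g) with d1 f = d0 g), m is composition, i inversion.\<close>
definition is_groupoid :: "('o, 'm) cat \<Rightarrow> 'o \<Rightarrow> 'o \<Rightarrow> 'm \<Rightarrow> 'm \<Rightarrow> 'm \<Rightarrow> bool" where
  "is_groupoid C X0 X1 d0 d1 s0 \<longleftrightarrow> refl_graph C X0 X1 d0 d1 s0 \<and>
     (\<exists>P \<pi>1 \<pi>2 m i. is_pullback C d1 d0 P \<pi>1 \<pi>2 \<and>
        hom C m P X1 \<and> Cmp C d0 m = Cmp C d0 \<pi>1 \<and> Cmp C d1 m = Cmp C d1 \<pi>2 \<and>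
        hom C i X1 X1 \<and> Cmp C d0 i = d1 \<and> Cmp C d1 i = d0 \<and>
        (\<forall>e. hom C e X1 P \<and> Cmp C \<pi>1 e = Cmp C s0 d0 \<and> Cmp C \<pi>2 e = Idm C X1
           \<longrightarrow> Cmp C m e = Idm C X1) \<and>
        (\<forall>e. hom C e X1 P \<and> Cmp C \<pi>1 e = Idm C X1 \<and> Cmp C \<pi>2 e = Cmp C s0 d1
           \<longrightarrow> Cmp C m e = Idm C X1) \<and>
        (\<forall>e. hom C e X1 P \<and> Cmp C \<pi>1 e = Idm C X1 \<and> Cmp C \<pi>2 e = i
           \<longrightarrow> Cmp C m e = Cmp C s0 d0) \<and>
        (\<forall>e. hom C e X1 P \<and> Cmp C \<pi>1 e = i \<and> Cmp C \<pi>2 e = Idm C X1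
           \<longrightarrow> Cmp C m e = Cmp C s0 d1) \<and>
        (\<forall>Q q1 q2 u v. is_pullback C \<pi>2 \<pi>1 Q q1 q2 \<and>
           hom C u Q P \<and> Cmp C \<pi>1 u = Cmp C m q1 \<and> Cmp C \<pi>2 u = Cmp C \<pi>2 q2 \<and>
           hom C v Q P \<and> Cmp C \<pi>1 v = Cmp C \<pi>1 q1 \<and> Cmp C \<pi>2 v = Cmp C m q2
           \<longrightarrow> Cmp C m u = Cmp C m v))"

definition sigma_groupoid :: "('o, 'm) cat \<Rightarrow> ('m \<times> 'm) set \<Rightarrow> 'o \<Rightarrow> 'o \<Rightarrow> 'm \<Rightarrow> 'm \<Rightarrow> 'm \<Rightarrow> bool" where
  "sigma_groupoid C Sig X0 X1 d0 d1 s0 \<longleftrightarrow> is_groupoid C X0 X1 d0 d1 s0 \<and> (d0, s0) \<in> Sig"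

end

theory Submission
  imports Defs
begin

locale cctx =
  fixes C :: "('o,'m) cat"
  assumes cat: "category C"
begin

abbreviation dm where "dm \<equiv> Dom C"
abbreviation cd where "cd \<equiv> Cod C"
abbreviation idm where "idm \<equiv> Idm C"
abbreviation comp (infixr "\<cdot>" 55) where "g \<cdot> f \<equiv> Cmp C g f"

lemma id_dom[simp]: "dm (idm X) = X" and id_cod[simp]: "cd (idm X) = X"
  using cat unfolding category_def hom_def by blast+

lemma comp_dom[simp]: "cd f = dm g \<Longrightarrow> dm (g \<cdot> f) = dm f"
  and comp_cod[simp]: "cd f = dm g \<Longrightarrow> cd (g \<cdot> f) = cd g"
  using cat unfolding category_def hom_def by blast+

lemma idr[simp]: "dm f = X \<Longrightarrow> f \<cdot> idm X = f"
  and idl[simp]: "cd f = X \<Longrightarrow> idm X \<cdot> f = f"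
  using cat unfolding category_def by blast+

lemma assoc[simp]: "cd f = dm g \<Longrightarrow> cd g = dm h \<Longrightarrow> (h \<cdot> g) \<cdot> f = h \<cdot> (g \<cdot> f)"
  using cat unfolding category_def by (metis (no_types))

lemma compose_eq: "x \<cdot> y = z \<Longrightarrow> cd y = dm x \<Longrightarrow> cd h = dm y \<Longrightarrow> x \<cdot> (y \<cdot> h) = z \<cdot> h"
  by (metis assoc)

lemma ceq: "x \<cdot> y = x' \<cdot> y' \<Longrightarrow> cd y = dm x \<Longrightarrow> cd y' = dm x' \<Longrightarrow> cd h = dm y \<Longrightarrow> cd h = dm y' \<Longrightarrow> x \<cdot> (y \<cdot> h) = x' \<cdot> (y' \<cdot> h)"
  by (metis assoc)

lemma assoc': "cd f = dm g \<Longrightarrow> cd g = dm h \<Longrightarrow> h \<cdot> (g \<cdot> f) = (h \<cdot> g) \<cdot> f"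
  by simp

end

definition pbp :: "('o,'m) cat \<Rightarrow> 'm \<Rightarrow> 'm \<Rightarrow> 'm \<Rightarrow> 'm \<Rightarrow> 'm" where
  "pbp C p q a b = (THE u. Dom C u = Dom C a \<and> Cod C u = Dom C p \<and> Cmp C p u = a \<and> Cmp C q u = b)"

context cctx begin

lemma pb_basic:
  assumes "is_pullback C f g P p q"
  shows "dm p = P" "dm q = P" "cd p = dm f" "cd q = dm g" "f \<cdot> p = g \<cdot> q" "cd f = cd g"
  using assms unfolding is_pullback_def hom_def by blast+

lemma pb_sym: "is_pullback C f g P p q \<Longrightarrow> is_pullback C g f P q p"
  unfolding is_pullback_def hom_def by metis

lemma pbp:
  assumes pb: "is_pullback C f g P p q" and "cd a = dm f" "cd b = dm g" "dm a = dm b" "f \<cdot> a = g \<cdot> b"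
  shows "dm (pbp C p q a b) = dm a" "cd (pbp C p q a b) = P"
    "p \<cdot> pbp C p q a b = a" "q \<cdot> pbp C p q a b = b"
proof -
  have U: "\<forall>W a b. hom C a W (dm f) \<and> hom C b W (dm g) \<and> f \<cdot> a = g \<cdot> b \<longrightarrow>
        (\<exists>!u. hom C u W P \<and> p \<cdot> u = a \<and> q \<cdot> u = b)"
    using pb unfolding is_pullback_def by blast
  have ex: "\<exists>!u. hom C u (dm a) P \<and> p \<cdot> u = a \<and> q \<cdot> u = b"
    apply (rule U[rule_format]) using assms unfolding hom_def by simp
  have P: "dm p = P" using pb_basic[OF pb] by simp
  have ex': "\<exists>!u. dm u = dm a \<and> cd u = dm p \<and> p \<cdot> u = a \<and> q \<cdot> u = b"
    using ex P by (simp add: hom_def)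
  have "dm (pbp C p q a b) = dm a \<and> cd (pbp C p q a b) = dm p \<and> p \<cdot> pbp C p q a b = a \<and> q \<cdot> pbp C p q a b = b"
    unfolding pbp_def by (rule theI'[OF ex'])
  then show "dm (pbp C p q a b) = dm a" "cd (pbp C p q a b) = P"
    "p \<cdot> pbp C p q a b = a" "q \<cdot> pbp C p q a b = b" using P by auto
qed

lemma pb_ext:
  assumes pb: "is_pullback C f g P p q" and "cd u = P" "cd v = P" "dm u = dm v"
    "p \<cdot> u = p \<cdot> v" "q \<cdot> u = q \<cdot> v"
  shows "u = v"
proof -
  note b = pb_basic[OF pb]
  have U: "\<forall>W a b. hom C a W (dm f) \<and> hom C b W (dm g) \<and> f \<cdot> a = g \<cdot> b \<longrightarrow>
        (\<exists>!u. hom C u W P \<and> p \<cdot> u = a \<and> q \<cdot> u = b)"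
    using pb unfolding is_pullback_def by blast
  have e: "f \<cdot> (p \<cdot> u) = g \<cdot> (q \<cdot> u)" using compose_eq[OF b(5)] b assms(2) by simp
  have ex: "\<exists>!w. hom C w (dm u) P \<and> p \<cdot> w = p \<cdot> u \<and> q \<cdot> w = q \<cdot> u"
    apply (rule U[rule_format]) using assms b e unfolding hom_def by simp
  have 1: "hom C u (dm u) P \<and> p \<cdot> u = p \<cdot> u \<and> q \<cdot> u = q \<cdot> u" using assms unfolding hom_def by simp
  have 2: "hom C v (dm u) P \<and> p \<cdot> v = p \<cdot> u \<and> q \<cdot> v = q \<cdot> u" using assms unfolding hom_def by simp
  show ?thesis using ex 1 2 by blast
qed

lemma pbp_unique:
  assumes pb: "is_pullback C f g P p q" and "cd a = dm f" "cd b = dm g" "dm a = dm b" "f \<cdot> a = g \<cdot> b"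
    and "cd u = P" "dm u = dm a" "p \<cdot> u = a" "q \<cdot> u = b"
  shows "u = pbp C p q a b"
  using pb_ext[OF pb] pbp[OF assms(1-5)] assms by metis

lemma pbp_nat:
  assumes pb: "is_pullback C f g P p q" and "cd a = dm f" "cd b = dm g" "dm a = dm b" "f \<cdot> a = g \<cdot> b"
    and "cd h = dm a"
  shows "pbp C p q a b \<cdot> h = pbp C p q (a \<cdot> h) (b \<cdot> h)"
proof -
  note b = pb_basic[OF pb] and pp = pbp[OF assms(1-5)]
  have 1: "p \<cdot> (pbp C p q a b \<cdot> h) = a \<cdot> h"
    using assoc'[of h "pbp C p q a b" p] pp b assms by simp
  have 2: "q \<cdot> (pbp C p q a b \<cdot> h) = b \<cdot> h"
    using assoc'[of h "pbp C p q a b" q] pp b assms by simp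
  show ?thesis
    apply (rule pbp_unique[OF pb])
    using assms b pp 1 2 compose_eq[OF assms(5)] by simp_all
qed


lemma pb_exists: "finitely_complete C \<Longrightarrow> cd f = cd g \<Longrightarrow> \<exists>P p q. is_pullback C f g P p q"
  unfolding finitely_complete_def by blast

lemma mono_cancel: "mono C m \<Longrightarrow> cd a = dm m \<Longrightarrow> cd b = dm m \<Longrightarrow> dm a = dm b \<Longrightarrow> m \<cdot> a = m \<cdot> b \<Longrightarrow> a = b"
  unfolding mono_def by blast

lemma monoI: "(\<And>a b. cd a = dm m \<Longrightarrow> cd b = dm m \<Longrightarrow> dm a = dm b \<Longrightarrow> m \<cdot> a = m \<cdot> b \<Longrightarrow> a = b) \<Longrightarrow> mono C m"
  unfolding mono_def by blast

lemma isoI: "cd g = dm f \<Longrightarrow> dm g = cd f \<Longrightarrow> g \<cdot> f = idm (dm f) \<Longrightarrow> f \<cdot> g = idm (cd f) \<Longrightarrow> iso C f"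
  unfolding iso_def hom_def by blast

lemma isoE: "iso C f \<Longrightarrow> (\<And>g. cd g = dm f \<Longrightarrow> dm g = cd f \<Longrightarrow> g \<cdot> f = idm (dm f) \<Longrightarrow> f \<cdot> g = idm (cd f) \<Longrightarrow> thesis) \<Longrightarrow> thesis"
  unfolding iso_def hom_def by blast

lemma terminal_unique: "is_terminal C T \<Longrightarrow> cd u = T \<Longrightarrow> cd v = T \<Longrightarrow> dm u = dm v \<Longrightarrow> u = v"
  unfolding is_terminal_def hom_def by metis

lemma terminal_ex: "is_terminal C T \<Longrightarrow> \<exists>u. dm u = X \<and> cd u = T"
  unfolding is_terminal_def hom_def by metis

lemma product_exists:
  assumes fc: "finitely_complete C"
  obtains Pr p1 p2 t1 t2 where "is_pullback C t1 t2 Pr p1 p2" "dm t1 = X" "dm t2 = Y"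
    "\<And>a b. cd a = X \<Longrightarrow> cd b = Y \<Longrightarrow> dm a = dm b \<Longrightarrow> t1 \<cdot> a = t2 \<cdot> b"
proof -
  obtain T where T: "is_terminal C T" using fc unfolding finitely_complete_def by blast
  obtain t1 where t1: "dm t1 = X" "cd t1 = T" using terminal_ex[OF T] by blast
  obtain t2 where t2: "dm t2 = Y" "cd t2 = T" using terminal_ex[OF T] by blast
  obtain Pr p1 p2 where pb: "is_pullback C t1 t2 Pr p1 p2" using pb_exists[OF fc] t1 t2 by metis
  show ?thesis
    apply (rule that[OF pb t1(1) t2(1)])
    apply (rule terminal_unique[OF T]) using t1 t2 by auto
qed

lemma pb_of_mono:
  assumes pb: "is_pullback C f g P p q" and m: "mono C g"
  shows "mono C p"
proof (rule monoI)
  fix a b assume a: "cd a = dm p" "cd b = dm p" "dm a = dm b" "p \<cdot> a = p \<cdot> b"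
  note B = pb_basic[OF pb]
  have "g \<cdot> (q \<cdot> a) = f \<cdot> (p \<cdot> a)" by (rule ceq) (use B a in auto)
  also have "\<dots> = f \<cdot> (p \<cdot> b)" using a by simp
  also have "\<dots> = g \<cdot> (q \<cdot> b)" by (rule ceq) (use B a in auto)
  finally have "g \<cdot> (q \<cdot> a) = g \<cdot> (q \<cdot> b)" .
  then have "q \<cdot> a = q \<cdot> b" using mono_cancel[OF m] a B by simp
  then show "a = b" using pb_ext[OF pb] a B by simp
qed

lemma jeeD: "jointly_extremally_epic C a b Z \<Longrightarrow> mono C m \<Longrightarrow> cd m = Z \<Longrightarrow> dm a' = dm a \<Longrightarrow> cd a' = dm m
   \<Longrightarrow> dm b' = dm b \<Longrightarrow> cd b' = dm m \<Longrightarrow> m \<cdot> a' = a \<Longrightarrow> m \<cdot> b' = b \<Longrightarrow> iso C m"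
  unfolding jointly_extremally_epic_def hom_def by blast

lemma jee_eq:
  assumes fc: "finitely_complete C" and J: "jointly_extremally_epic C a b Z"
    and u: "dm u = Z" "dm v = Z" "cd u = cd v" and ea: "u \<cdot> a = v \<cdot> a" and eb: "u \<cdot> b = v \<cdot> b"
  shows "u = v"
proof -
  have aZ: "cd a = Z" "cd b = Z" using J unfolding jointly_extremally_epic_def by auto
  obtain Pr p1 p2 t1 t2 where pb: "is_pullback C t1 t2 Pr p1 p2" and t: "dm t1 = Z" "dm t2 = cd u"
    and tt: "\<And>a b. cd a = Z \<Longrightarrow> cd b = cd u \<Longrightarrow> dm a = dm b \<Longrightarrow> t1 \<cdot> a = t2 \<cdot> b"
    using product_exists[OF fc] by metis
  note B = pb_basic[OF pb]
  define x where "x = pbp C p1 p2 (idm Z) u"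
  define y where "y = pbp C p1 p2 (idm Z) v"
  note X = pbp[OF pb, of "idm Z" u, folded x_def] and Y = pbp[OF pb, of "idm Z" v, folded y_def]
  have X: "dm x = Z" "cd x = Pr" "p1 \<cdot> x = idm Z" "p2 \<cdot> x = u" using X t u tt[of "idm Z" u] by auto
  have Y: "dm y = Z" "cd y = Pr" "p1 \<cdot> y = idm Z" "p2 \<cdot> y = v" using Y t u tt[of "idm Z" v] by auto
  obtain E e1 e2 where pe: "is_pullback C x y E e1 e2" using pb_exists[OF fc] X Y by metis
  note BE = pb_basic[OF pe]
  have e12: "e1 = e2"
  proof -
    have "e1 = (p1 \<cdot> x) \<cdot> e1" using X BE by simp
    also have "\<dots> = p1 \<cdot> (x \<cdot> e1)" by (rule assoc) (use X BE B in simp_all)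
    also have "\<dots> = p1 \<cdot> (y \<cdot> e2)" using BE(5) by simp
    also have "\<dots> = (p1 \<cdot> y) \<cdot> e2" by (rule assoc[symmetric]) (use Y BE B in simp_all)
    also have "\<dots> = e2" using Y BE by simp
    finally show ?thesis .
  qed
  have mono: "mono C e1"
  proof (rule monoI)
    fix \<alpha> \<beta> assume h: "cd \<alpha> = dm e1" "cd \<beta> = dm e1" "dm \<alpha> = dm \<beta>" "e1 \<cdot> \<alpha> = e1 \<cdot> \<beta>"
    show "\<alpha> = \<beta>" apply (rule pb_ext[OF pe]) using h BE e12 by auto
  qed
  have fac: "\<exists>w. dm w = dm c \<and> cd w = E \<and> e1 \<cdot> w = c" if c: "cd c = Z" "u \<cdot> c = v \<cdot> c" for c
  proof -
    have xy: "x \<cdot> c = y \<cdot> c"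
      apply (rule pb_ext[OF pb])
      using c X Y B compose_eq[OF X(3)] compose_eq[OF Y(3)] compose_eq[OF X(4)] compose_eq[OF Y(4)] by auto
    show ?thesis using pbp[OF pe, of c c] xy c X Y by auto
  qed
  obtain a' where a': "dm a' = dm a" "cd a' = E" "e1 \<cdot> a' = a" using fac[OF aZ(1) ea] by blast
  obtain b' where b': "dm b' = dm b" "cd b' = E" "e1 \<cdot> b' = b" using fac[OF aZ(2) eb] by blast
  have "iso C e1" by (rule jeeD[OF J mono _ a'(1) _ b'(1) _ a'(3) b'(3)]) (use BE a' b' X in auto)
  then obtain g where g: "cd g = dm e1" "dm g = cd e1" "g \<cdot> e1 = idm (dm e1)" "e1 \<cdot> g = idm (cd e1)" by (rule isoE)
  have ue: "u \<cdot> e1 = v \<cdot> e1"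
  proof -
    have "u \<cdot> e1 = (p2 \<cdot> x) \<cdot> e1" using X BE by simp
    also have "\<dots> = p2 \<cdot> (x \<cdot> e1)" by (rule assoc) (use X BE B in simp_all)
    also have "\<dots> = p2 \<cdot> (y \<cdot> e2)" using BE(5) by simp
    also have "\<dots> = (p2 \<cdot> y) \<cdot> e2" by (rule assoc[symmetric]) (use Y BE B in simp_all)
    also have "\<dots> = v \<cdot> e1" using Y BE e12 by simp
    finally show ?thesis .
  qed
  have "u = u \<cdot> (e1 \<cdot> g)" using g BE X u by simp
  also have "\<dots> = v \<cdot> (e1 \<cdot> g)" using assoc'[of g e1 u] assoc'[of g e1 v] ue g BE X u by simp
  also have "\<dots> = v" using g BE X u by simp
  finally show ?thesis .
qed

lemma jee_factor:
  assumes fc: "finitely_complete C" and J: "jointly_extremally_epic C a b Z"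
    and n: "mono C n" and phi: "dm phi = Z" "cd phi = cd n"
    and a': "cd a' = dm n" "dm a' = dm a" "phi \<cdot> a = n \<cdot> a'"
    and b': "cd b' = dm n" "dm b' = dm b" "phi \<cdot> b = n \<cdot> b'"
  shows "\<exists>psi. dm psi = Z \<and> cd psi = dm n \<and> n \<cdot> psi = phi"
proof -
  have aZ: "cd a = Z" "cd b = Z" using J unfolding jointly_extremally_epic_def by auto
  obtain E e1 e2 where pe: "is_pullback C phi n E e1 e2" using pb_exists[OF fc] phi by metis
  note BE = pb_basic[OF pe]
  have mono: "mono C e1" by (rule pb_of_mono[OF pe n])
  note A = pbp[OF pe, of a a'] and Bq = pbp[OF pe, of b b']
  have "iso C e1" by (rule jeeD[OF J mono _ _ _ _ _ A(3) Bq(3)]) (use BE a' b' aZ phi A Bq in auto)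
  then obtain g where g: "cd g = dm e1" "dm g = cd e1" "g \<cdot> e1 = idm (dm e1)" "e1 \<cdot> g = idm (cd e1)" by (rule isoE)
  have "n \<cdot> (e2 \<cdot> g) = phi \<cdot> (e1 \<cdot> g)"
    using compose_eq[OF BE(5)[symmetric], of g] compose_eq[OF BE(5), of g] g BE by simp
  also have "\<dots> = phi" using g BE phi by simp
  finally show ?thesis using g BE phi by (intro exI[of _ "e2 \<cdot> g"]) simp
qed

end

context cctx begin

lemma is_pullbackI:
  assumes "cd f = cd g" "dm p = P" "cd p = dm f" "dm q = P" "cd q = dm g" "f \<cdot> p = g \<cdot> q"
    and ex: "\<And>a b. cd a = dm f \<Longrightarrow> cd b = dm g \<Longrightarrow> dm a = dm b \<Longrightarrow> f \<cdot> a = g \<cdot> b \<Longrightarrow>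
        \<exists>u. dm u = dm a \<and> cd u = P \<and> p \<cdot> u = a \<and> q \<cdot> u = b"
    and un: "\<And>u v. cd u = P \<Longrightarrow> cd v = P \<Longrightarrow> dm u = dm v \<Longrightarrow> p \<cdot> u = p \<cdot> v \<Longrightarrow> q \<cdot> u = q \<cdot> v \<Longrightarrow> u = v"
  shows "is_pullback C f g P p q"
proof -
  have U: "\<forall>W a b. hom C a W (dm f) \<and> hom C b W (dm g) \<and> f \<cdot> a = g \<cdot> b \<longrightarrow>
        (\<exists>!u. hom C u W P \<and> p \<cdot> u = a \<and> q \<cdot> u = b)"
  proof (intro allI impI)
    fix W a b assume h: "hom C a W (dm f) \<and> hom C b W (dm g) \<and> f \<cdot> a = g \<cdot> b"
    then have h': "cd a = dm f" "cd b = dm g" "dm a = dm b" "f \<cdot> a = g \<cdot> b" "dm a = W"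
      unfolding hom_def by auto
    obtain u where u: "dm u = dm a" "cd u = P" "p \<cdot> u = a" "q \<cdot> u = b" using ex[OF h'(1-4)] by blast
    show "\<exists>!u. hom C u W P \<and> p \<cdot> u = a \<and> q \<cdot> u = b"
    proof (rule ex1I[of _ u])
      show "hom C u W P \<and> p \<cdot> u = a \<and> q \<cdot> u = b" using u h' unfolding hom_def by simp
      fix v assume v: "hom C v W P \<and> p \<cdot> v = a \<and> q \<cdot> v = b"
      show "v = u" apply (rule un) using u h' v unfolding hom_def by simp_all
    qed
  qed
  have "hom C p P (dm f)" "hom C q P (dm g)" using assms(2-5) unfolding hom_def by simp_all
  then show ?thesis unfolding is_pullback_def using U assms(1,6) by blast
qed

lemma fibD:
  assumes "fibrational C Sig" "(f, s) \<in> Sig" "cd h = cd f" "is_pullback C h f P f' h'"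
    "dm s' = dm h" "cd s' = P" "f' \<cdot> s' = idm (dm h)" "h' \<cdot> s' = s \<cdot> h"
  shows "(f', s') \<in> Sig"
proof -
  have A: "\<forall>f s h P f' h' s'. (f, s) \<in> Sig \<and> Cod C h = Cod C f \<and> is_pullback C h f P f' h' \<and>
        hom C s' (Dom C h) P \<and> Cmp C f' s' = Idm C (Dom C h) \<and> Cmp C h' s' = Cmp C s h
        \<longrightarrow> (f', s') \<in> Sig" using assms(1) unfolding fibrational_def by (rule conjunct2[OF conjunct2])
  show ?thesis by (rule A[rule_format, of f s h P f' h' s']) (use assms(2-8) in \<open>simp add: hom_def\<close>)
qed

lemma kernel_swap: "kernel_rel C d K k0 k1 \<delta> \<Longrightarrow> kernel_rel C d K k1 k0 \<delta>"
  unfolding kernel_rel_def using pb_sym by blast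

lemma kernel_basic:
  assumes "kernel_rel C d K k0 k1 \<delta>"
  shows "is_pullback C d d K k0 k1" "dm k0 = K" "dm k1 = K" "cd k0 = dm d" "cd k1 = dm d"
    "d \<cdot> k0 = d \<cdot> k1" "dm \<delta> = dm d" "cd \<delta> = K" "k0 \<cdot> \<delta> = idm (dm d)" "k1 \<cdot> \<delta> = idm (dm d)"
  using assms pb_basic[of d d K k0 k1] unfolding kernel_rel_def hom_def by auto

lemma kernel_exists:
  assumes fc: "finitely_complete C"
  shows "\<exists>K k0 k1 \<delta>. kernel_rel C d K k0 k1 \<delta>"
proof -
  obtain K k0 k1 where pb: "is_pullback C d d K k0 k1" using pb_exists[OF fc] by metis
  note p = pbp[OF pb, of "idm (dm d)" "idm (dm d)"]
  have "kernel_rel C d K k0 k1 (pbp C k0 k1 (idm (dm d)) (idm (dm d)))"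
    unfolding kernel_rel_def hom_def using pb p by auto
  then show ?thesis by blast
qed

lemma kernel_refl_rel:
  assumes k: "kernel_rel C d K k0 k1 \<delta>"
  shows "refl_rel C (dm d) K k0 k1 \<delta>"
proof -
  note B = kernel_basic[OF k]
  have rg: "refl_graph C (dm d) K k0 k1 \<delta>" unfolding refl_graph_def hom_def using B by auto
  have "mono C m" if "is_product C (dm d) (dm d) Pr p q" "hom C m K Pr" "p \<cdot> m = k0" "q \<cdot> m = k1" for Pr p q m
  proof (rule monoI)
    fix a b assume h: "cd a = dm m" "cd b = dm m" "dm a = dm b" "m \<cdot> a = m \<cdot> b"
    have pq: "dm p = Pr" "dm q = Pr" using that unfolding is_product_def hom_def by auto
    have m: "dm m = K" "cd m = Pr" using that(2) unfolding hom_def by auto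
    have "k0 \<cdot> a = p \<cdot> (m \<cdot> a)" using that(3) h m pq by (simp flip: that(3))
    also have "\<dots> = k0 \<cdot> b" using that(3) h m pq by (simp flip: that(3))
    finally have e0: "k0 \<cdot> a = k0 \<cdot> b" .
    have "k1 \<cdot> a = q \<cdot> (m \<cdot> a)" using that(4) h m pq by (simp flip: that(4))
    also have "q \<cdot> (m \<cdot> a) = k1 \<cdot> b" using that(4) h m pq by (simp flip: that(4))
    finally have e1: "k1 \<cdot> a = k1 \<cdot> b" .
    show "a = b" using pb_ext[OF B(1) _ _ _ e0 e1] h m by auto
  qed
  then show ?thesis unfolding refl_rel_def using rg by blast
qed

lemma product_from_pb:
  assumes pb: "is_pullback C t1 t2 Pr p1 p2"
    and tt: "\<And>a b. cd a = dm t1 \<Longrightarrow> cd b = dm t2 \<Longrightarrow> dm a = dm b \<Longrightarrow> t1 \<cdot> a = t2 \<cdot> b"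
  shows "is_product C (dm t1) (dm t2) Pr p1 p2"
proof -
  have U: "\<forall>W a b. hom C a W (dm t1) \<and> hom C b W (dm t2) \<and> t1 \<cdot> a = t2 \<cdot> b \<longrightarrow>
        (\<exists>!u. hom C u W Pr \<and> p1 \<cdot> u = a \<and> p2 \<cdot> u = b)"
    using pb unfolding is_pullback_def by blast
  have H: "hom C p1 Pr (dm t1)" "hom C p2 Pr (dm t2)" using pb unfolding is_pullback_def by blast+
  show ?thesis unfolding is_product_def
  proof (intro conjI H allI impI)
    fix W a b assume "hom C a W (dm t1) \<and> hom C b W (dm t2)"
    then have c: "cd a = dm t1" "cd b = dm t2" "dm a = W" "dm b = W" unfolding hom_def by auto
    have "hom C a W (dm t1) \<and> hom C b W (dm t2) \<and> t1 \<cdot> a = t2 \<cdot> b"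
      using c tt[OF c(1,2)] unfolding hom_def by simp
    then show "\<exists>!u. hom C u W Pr \<and> p1 \<cdot> u = a \<and> p2 \<cdot> u = b" using U by blast
  qed
qed

lemma rel_jm:
  assumes fc: "finitely_complete C" and r: "refl_rel C X S d0 d1 s0"
    and "cd u = S" "cd v = S" "dm u = dm v" "d0 \<cdot> u = d0 \<cdot> v" "d1 \<cdot> u = d1 \<cdot> v"
  shows "u = v"
proof -
  have rg: "dm d0 = S" "cd d0 = X" "dm d1 = S" "cd d1 = X" "dm s0 = X" "cd s0 = S"
    using r unfolding refl_rel_def refl_graph_def hom_def by auto
  obtain Pr p1 p2 t1 t2 where pb: "is_pullback C t1 t2 Pr p1 p2" and t: "dm t1 = X" "dm t2 = X"
    and tt: "\<And>a b. cd a = X \<Longrightarrow> cd b = X \<Longrightarrow> dm a = dm b \<Longrightarrow> t1 \<cdot> a = t2 \<cdot> b"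
    using product_exists[OF fc] by metis
  have prod: "is_product C X X Pr p1 p2" using product_from_pb[OF pb] tt t by metis
  note B = pb_basic[OF pb]
  define m where "m = pbp C p1 p2 d0 d1"
  note M = pbp[OF pb, of d0 d1, folded m_def]
  have M: "dm m = S" "cd m = Pr" "p1 \<cdot> m = d0" "p2 \<cdot> m = d1" using M rg t tt[of d0 d1] by auto
  have mono: "mono C m" using r prod M unfolding refl_rel_def hom_def by blast
  have "m \<cdot> u = m \<cdot> v"
    apply (rule pb_ext[OF pb])
    using M B assms compose_eq[OF M(3)] compose_eq[OF M(4)] by auto
  then show ?thesis using mono_cancel[OF mono] M assms by auto
qed

lemma sig_from_kernel:
  assumes fib: "fibrational C Sig" and k: "kernel_rel C d K k0 k1 \<delta>" and ks: "(k0, \<delta>) \<in> Sig"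
    and s: "dm s = cd d" "cd s = dm d" "d \<cdot> s = idm (cd d)"
  shows "(d, s) \<in> Sig"
proof -
  note B = kernel_basic[OF k]
  define h where "h = pbp C k0 k1 (s \<cdot> d) (idm (dm d))"
  have e: "d \<cdot> (s \<cdot> d) = d" using compose_eq[OF s(3)] s by simp
  note H = pbp[OF B(1), of "s \<cdot> d" "idm (dm d)", folded h_def]
  have H: "dm h = dm d" "cd h = K" "k0 \<cdot> h = s \<cdot> d" "k1 \<cdot> h = idm (dm d)" using H s B e by auto
  have pb: "is_pullback C s k0 (dm d) d h"
  proof (rule is_pullbackI)
    fix a b assume ab: "cd a = dm s" "cd b = dm k0" "dm a = dm b" "s \<cdot> a = k0 \<cdot> b"
    have "d \<cdot> (k1 \<cdot> b) = d \<cdot> (k0 \<cdot> b)" using ceq[OF B(6)[symmetric]] ab B by simp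
    also have "\<dots> = d \<cdot> (s \<cdot> a)" using ab by simp
    also have "\<dots> = a" using compose_eq[OF s(3)] ab(1) s by simp
    finally have da: "d \<cdot> (k1 \<cdot> b) = a" .
    have hb: "h \<cdot> (k1 \<cdot> b) = b"
    proof (rule pb_ext[OF B(1)])
      show "k0 \<cdot> (h \<cdot> (k1 \<cdot> b)) = k0 \<cdot> b"
        using compose_eq[OF H(3)] ab B H s da by (simp flip: ab(4))
      show "k1 \<cdot> (h \<cdot> (k1 \<cdot> b)) = k1 \<cdot> b"
        using compose_eq[OF H(4)] ab B H s by simp
    qed (use ab B H in auto)
    show "\<exists>u. dm u = dm a \<and> cd u = dm d \<and> d \<cdot> u = a \<and> h \<cdot> u = b"
      by (rule exI[of _ "k1 \<cdot> b"]) (use ab B H da hb in auto)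
  next
    fix u v assume uv: "cd u = dm d" "cd v = dm d" "dm u = dm v" "d \<cdot> u = d \<cdot> v" "h \<cdot> u = h \<cdot> v"
    have "u = k1 \<cdot> (h \<cdot> u)" using compose_eq[OF H(4)] uv(1) H B by simp
    also have "\<dots> = k1 \<cdot> (h \<cdot> v)" using uv(5) by simp
    also have "\<dots> = v" using compose_eq[OF H(4)] uv(2) H B by simp
    finally show "u = v" .
  qed (use s B H in auto)
  have hs: "h \<cdot> s = \<delta> \<cdot> s"
    apply (rule pb_ext[OF B(1)])
    using compose_eq[OF H(3)] compose_eq[OF H(4)] compose_eq[OF B(9)] compose_eq[OF B(10)] s B H e
    by (auto simp: compose_eq[OF s(3)])
  show ?thesis
    apply (rule fibD[OF fib ks _ pb])
    using s B H hs by auto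
qed

end

context cctx begin

lemma rel_basic:
  assumes "refl_rel C X S d0 d1 s0"
  shows "dm d0 = S" "cd d0 = X" "dm d1 = S" "cd d1 = X" "dm s0 = X" "cd s0 = S"
    "d0 \<cdot> s0 = idm X" "d1 \<cdot> s0 = idm X"
  using assms unfolding refl_rel_def refl_graph_def hom_def by auto

lemma part2_fwd:
  assumes fc: "finitely_complete C" and fib: "fibrational C Sig"
    and r: "refl_rel C X S d0 d1 s0" and se: "sigma_equiv_rel C Sig X S d0 d1 s0"
  shows "kernel_is_sigma_rel C Sig d0"
  unfolding kernel_is_sigma_rel_def
proof (intro allI impI)
  fix K k0 k1 \<delta> assume k: "kernel_rel C d0 K k0 k1 \<delta>"
  note R = rel_basic[OF r]
  note B = kernel_basic[OF k]
  have sig: "(d0, s0) \<in> Sig" using se unfolding sigma_equiv_rel_def by blast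
  have eq: "equiv_rel C X S d0 d1 s0" using se unfolding sigma_equiv_rel_def by blast
  obtain \<sigma> where \<sigma>: "dm \<sigma> = S" "cd \<sigma> = S" "d0 \<cdot> \<sigma> = d1" "d1 \<cdot> \<sigma> = d0"
    using eq unfolding equiv_rel_def hom_def by blast
  obtain P \<pi>1 \<pi>2 where pb: "is_pullback C d1 d0 P \<pi>1 \<pi>2" using pb_exists[OF fc] R by metis
  note PB = pb_basic[OF pb]
  obtain \<tau> where \<tau>: "dm \<tau> = P" "cd \<tau> = S" "d0 \<cdot> \<tau> = d0 \<cdot> \<pi>1" "d1 \<cdot> \<tau> = d1 \<cdot> \<pi>2"
    using eq pb unfolding equiv_rel_def hom_def by blast
  have jm: "u = v" if "cd u = S" "cd v = S" "dm u = dm v" "d0 \<cdot> u = d0 \<cdot> v" "d1 \<cdot> u = d1 \<cdot> v" for u v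
    using rel_jm[OF fc r that] .
  define tr where "tr a b = \<tau> \<cdot> pbp C \<pi>1 \<pi>2 a b" for a b
  have tr: "dm (tr a b) = dm a" "cd (tr a b) = S" "d0 \<cdot> tr a b = d0 \<cdot> a" "d1 \<cdot> tr a b = d1 \<cdot> b"
    if "cd a = S" "cd b = S" "dm a = dm b" "d1 \<cdot> a = d0 \<cdot> b" for a b
  proof -
    note Q = pbp[OF pb, of a b]
    have Q: "dm (pbp C \<pi>1 \<pi>2 a b) = dm a" "cd (pbp C \<pi>1 \<pi>2 a b) = P" "\<pi>1 \<cdot> pbp C \<pi>1 \<pi>2 a b = a"
      "\<pi>2 \<cdot> pbp C \<pi>1 \<pi>2 a b = b" using Q that R by auto
    show "dm (tr a b) = dm a" "cd (tr a b) = S" unfolding tr_def using Q \<tau> by auto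
    show "d0 \<cdot> tr a b = d0 \<cdot> a" unfolding tr_def using compose_eq[OF \<tau>(3)] Q \<tau> PB R
      by (simp add: compose_eq[OF Q(3)])
    show "d1 \<cdot> tr a b = d1 \<cdot> b" unfolding tr_def using compose_eq[OF \<tau>(4)] Q \<tau> PB R
      by (simp add: compose_eq[OF Q(4)])
  qed
  have e0: "d1 \<cdot> (\<sigma> \<cdot> k0) = d0 \<cdot> k1" using compose_eq[OF \<sigma>(4)] B R \<sigma> by simp
  define c where "c = tr (\<sigma> \<cdot> k0) k1"
  have C: "dm c = K" "cd c = S" "d0 \<cdot> c = d1 \<cdot> k0" "d1 \<cdot> c = d1 \<cdot> k1"
    unfolding c_def using tr[of "\<sigma> \<cdot> k0" k1] e0 B R \<sigma> compose_eq[OF \<sigma>(3)] by auto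
  have pbK: "is_pullback C d1 d0 K k0 c"
  proof (rule is_pullbackI)
    fix a b assume ab: "cd a = dm d1" "cd b = dm d0" "dm a = dm b" "d1 \<cdot> a = d0 \<cdot> b"
    note T = tr[of a b]
    have T: "dm (tr a b) = dm a" "cd (tr a b) = S" "d0 \<cdot> tr a b = d0 \<cdot> a" "d1 \<cdot> tr a b = d1 \<cdot> b"
      using T ab R by auto
    define u where "u = pbp C k0 k1 a (tr a b)"
    note U = pbp[OF B(1), of a "tr a b", folded u_def]
    have U: "dm u = dm a" "cd u = K" "k0 \<cdot> u = a" "k1 \<cdot> u = tr a b" using U ab R T B by auto
    have cu: "c \<cdot> u = b"
      apply (rule jm)
      using ab R U C T B compose_eq[OF C(3)] compose_eq[OF C(4)]
      by simp_all
    show "\<exists>u. dm u = dm a \<and> cd u = K \<and> k0 \<cdot> u = a \<and> c \<cdot> u = b"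
      using U cu by blast
  next
    fix u v assume uv: "cd u = K" "cd v = K" "dm u = dm v" "k0 \<cdot> u = k0 \<cdot> v" "c \<cdot> u = c \<cdot> v"
    have a: "d0 \<cdot> (k1 \<cdot> u) = d0 \<cdot> (k1 \<cdot> v)"
    proof -
      have "d0 \<cdot> (k1 \<cdot> u) = d0 \<cdot> (k0 \<cdot> u)" by (rule ceq[OF B(6)[symmetric]]) (use B R uv in auto)
      also have "\<dots> = d0 \<cdot> (k0 \<cdot> v)" using uv(4) by simp
      also have "\<dots> = d0 \<cdot> (k1 \<cdot> v)" by (rule ceq[OF B(6)]) (use B R uv in auto)
      finally show ?thesis .
    qed
    have b: "d1 \<cdot> (k1 \<cdot> u) = d1 \<cdot> (k1 \<cdot> v)"
    proof -
      have "d1 \<cdot> (k1 \<cdot> u) = d1 \<cdot> (c \<cdot> u)" by (rule ceq[OF C(4)[symmetric]]) (use B R uv C in auto)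
      also have "\<dots> = d1 \<cdot> (c \<cdot> v)" using uv(5) by simp
      also have "\<dots> = d1 \<cdot> (k1 \<cdot> v)" by (rule ceq[OF C(4)]) (use B R uv C in auto)
      finally show ?thesis .
    qed
    have "k1 \<cdot> u = k1 \<cdot> v" by (rule jm) (use a b uv B R in auto)
    then show "u = v" using pb_ext[OF B(1)] uv by auto
  qed (use R B C in auto)
  have cd: "c \<cdot> \<delta> = s0 \<cdot> d1"
    apply (rule jm)
    using R B C compose_eq[OF C(3)] compose_eq[OF C(4)] compose_eq[OF R(7)] compose_eq[OF R(8)] by auto
  have "(k0, \<delta>) \<in> Sig"
    by (rule fibD[OF fib sig _ pbK]) (use R B C cd in auto)
  then show "sigma_rel C Sig (dm d0) K k0 k1 \<delta>"
    unfolding sigma_rel_def using kernel_refl_rel[OF k] by blast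
qed

end

context cctx begin

lemma maltsev_jee:
  assumes mal: "sigma_maltsev C Sig" and fib: "fibrational C Sig" and fs: "(f, s) \<in> Sig"
    and t: "dm t = cd g" "cd t = dm g" "g \<cdot> t = idm (cd g)" and gf: "cd g = cd f"
    and pb: "is_pullback C g f X' f' g'"
  shows "jointly_extremally_epic C (pbp C f' g' (idm (dm g)) (s \<cdot> g)) (pbp C f' g' (t \<cdot> f) (idm (dm f))) X'"
proof -
  have se: "split_epi C f s" using fib fs unfolding fibrational_def by blast
  then have s: "dm s = cd f" "cd s = dm f" "f \<cdot> s = idm (cd f)" unfolding split_epi_def hom_def by auto
  note B = pb_basic[OF pb]
  note S' = pbp[OF pb, of "idm (dm g)" "s \<cdot> g"] and T' = pbp[OF pb, of "t \<cdot> f" "idm (dm f)"]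
  have e1: "f \<cdot> (s \<cdot> g) = g" using compose_eq[OF s(3)] s gf by simp
  have e2: "g \<cdot> (t \<cdot> f) = f" using compose_eq[OF t(3)] t gf by simp
  have S': "dm (pbp C f' g' (idm (dm g)) (s \<cdot> g)) = dm g" "cd (pbp C f' g' (idm (dm g)) (s \<cdot> g)) = X'"
     "f' \<cdot> pbp C f' g' (idm (dm g)) (s \<cdot> g) = idm (dm g)" "g' \<cdot> pbp C f' g' (idm (dm g)) (s \<cdot> g) = s \<cdot> g"
    using S' s gf e1 by auto
  have T': "dm (pbp C f' g' (t \<cdot> f) (idm (dm f))) = dm f" "cd (pbp C f' g' (t \<cdot> f) (idm (dm f))) = X'"
     "f' \<cdot> pbp C f' g' (t \<cdot> f) (idm (dm f)) = t \<cdot> f" "g' \<cdot> pbp C f' g' (t \<cdot> f) (idm (dm f)) = idm (dm f)"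
    using T' t gf e2 by auto
  have A: "\<forall>f s g t X' f' g' s' tb.
        (f, s) \<in> Sig \<and> split_epi C g t \<and> Cod C g = Cod C f \<and> is_pullback C g f X' f' g' \<and>
        hom C s' (Dom C g) X' \<and> Cmp C f' s' = Idm C (Dom C g) \<and> Cmp C g' s' = Cmp C s g \<and>
        hom C tb (Dom C f) X' \<and> Cmp C f' tb = Cmp C t f \<and> Cmp C g' tb = Idm C (Dom C f)
        \<longrightarrow> jointly_extremally_epic C s' tb X'" using mal unfolding sigma_maltsev_def .
  show ?thesis
    apply (rule A[rule_format, of f s g t X' f' g'])
    using fs t gf pb S' T' unfolding split_epi_def hom_def by auto
qed

lemma rel_mono_obtain:
  assumes fc: "finitely_complete C" and r: "refl_rel C X S d0 d1 s0"
  obtains Pr p1 p2 t1 t2 m where "is_pullback C t1 t2 Pr p1 p2"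
    "\<And>a b. cd a = X \<Longrightarrow> cd b = X \<Longrightarrow> dm a = dm b \<Longrightarrow> t1 \<cdot> a = t2 \<cdot> b"
    "dm t1 = X" "dm t2 = X"
    "dm m = S" "cd m = Pr" "p1 \<cdot> m = d0" "p2 \<cdot> m = d1" "mono C m"
proof -
  note R = rel_basic[OF r]
  obtain Pr p1 p2 t1 t2 where pb: "is_pullback C t1 t2 Pr p1 p2" and t: "dm t1 = X" "dm t2 = X"
    and tt: "\<And>a b. cd a = X \<Longrightarrow> cd b = X \<Longrightarrow> dm a = dm b \<Longrightarrow> t1 \<cdot> a = t2 \<cdot> b"
    using product_exists[OF fc] by metis
  have prod: "is_product C X X Pr p1 p2" using product_from_pb[OF pb] tt t by metis
  note B = pb_basic[OF pb]
  define m where "m = pbp C p1 p2 d0 d1"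
  note M = pbp[OF pb, of d0 d1, folded m_def]
  have M: "dm m = S" "cd m = Pr" "p1 \<cdot> m = d0" "p2 \<cdot> m = d1" using M R t tt[of d0 d1] by auto
  have mono: "mono C m" using r prod M unfolding refl_rel_def hom_def by blast
  show ?thesis by (rule that[OF pb tt t M mono])
qed

end

context cctx begin

lemma part2_bwd:
  assumes fc: "finitely_complete C" and fib: "fibrational C Sig" and mal: "sigma_maltsev C Sig"
    and r: "refl_rel C X S d0 d1 s0" and ks: "kernel_is_sigma_rel C Sig d0"
  shows "sigma_equiv_rel C Sig X S d0 d1 s0"
proof -
  note R = rel_basic[OF r]
  obtain K k0 k1 \<delta> where k: "kernel_rel C d0 K k0 k1 \<delta>" using kernel_exists[OF fc] by blast
  obtain L l0 l1 \<epsilon> where l: "kernel_rel C d1 L l0 l1 \<epsilon>" using kernel_exists[OF fc] by blast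
  note KB = kernel_basic[OF k] and LB = kernel_basic[OF l]
  have kS: "(k0, \<delta>) \<in> Sig" using ks k unfolding kernel_is_sigma_rel_def sigma_rel_def by blast
  have sig: "(d0, s0) \<in> Sig" by (rule sig_from_kernel[OF fib k kS]) (use R in auto)
  obtain Pr p1 p2 t1 t2 m where pb: "is_pullback C t1 t2 Pr p1 p2"
    and tt: "\<And>a b. cd a = X \<Longrightarrow> cd b = X \<Longrightarrow> dm a = dm b \<Longrightarrow> t1 \<cdot> a = t2 \<cdot> b"
    and t: "dm t1 = X" "dm t2 = X"
    and M: "dm m = S" "cd m = Pr" "p1 \<cdot> m = d0" "p2 \<cdot> m = d1" and mono: "mono C m"
    by (rule rel_mono_obtain[OF fc r], rule that) assumption+
  note PB = pb_basic[OF pb]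
  obtain X' f' g' where pbX: "is_pullback C l0 k0 X' f' g'" using pb_exists[OF fc] KB LB R by metis
  note XB = pb_basic[OF pbX]
  define s' where "s' = pbp C f' g' (idm (dm l0)) (\<delta> \<cdot> l0)"
  define tb where "tb = pbp C f' g' (\<epsilon> \<cdot> k0) (idm (dm k0))"
  have J: "jointly_extremally_epic C s' tb X'" unfolding s'_def tb_def
    by (rule maltsev_jee[OF mal fib kS _ _ _ _ pbX]) (use LB KB R in auto)
  have e1: "k0 \<cdot> (\<delta> \<cdot> l0) = l0" using compose_eq[OF KB(9)] KB LB R by simp
  have e2: "l0 \<cdot> (\<epsilon> \<cdot> k0) = k0" using compose_eq[OF LB(9)] KB LB R by simp
  note S' = pbp[OF pbX, of "idm (dm l0)" "\<delta> \<cdot> l0", folded s'_def]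
  have S': "dm s' = L" "cd s' = X'" "f' \<cdot> s' = idm L" "g' \<cdot> s' = \<delta> \<cdot> l0"
    using S' KB LB R e1 by auto
  note T' = pbp[OF pbX, of "\<epsilon> \<cdot> k0" "idm (dm k0)", folded tb_def]
  have T': "dm tb = K" "cd tb = X'" "f' \<cdot> tb = \<epsilon> \<cdot> k0" "g' \<cdot> tb = idm K"
    using T' KB LB R e2 by auto
  define phi where "phi = pbp C p1 p2 (d0 \<cdot> (l1 \<cdot> f')) (d1 \<cdot> (k1 \<cdot> g'))"
  note PH = pbp[OF pb, of "d0 \<cdot> (l1 \<cdot> f')" "d1 \<cdot> (k1 \<cdot> g')", folded phi_def]
  have PH: "dm phi = X'" "cd phi = Pr" "p1 \<cdot> phi = d0 \<cdot> (l1 \<cdot> f')" "p2 \<cdot> phi = d1 \<cdot> (k1 \<cdot> g')"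
    using PH tt[of "d0 \<cdot> (l1 \<cdot> f')" "d1 \<cdot> (k1 \<cdot> g')"] t R KB LB XB by auto
  have fa: "phi \<cdot> s' = m \<cdot> l1"
  proof (rule pb_ext[OF pb])
    show "p1 \<cdot> (phi \<cdot> s') = p1 \<cdot> (m \<cdot> l1)"
      using compose_eq[OF PH(3)] compose_eq[OF M(3)] S' PH M R KB LB XB PB by simp
    have "p2 \<cdot> (phi \<cdot> s') = d1 \<cdot> (k1 \<cdot> (\<delta> \<cdot> l0))"
      using compose_eq[OF PH(4)] compose_eq[OF S'(4)] S' PH M R KB LB XB PB by simp
    also have "\<dots> = d1 \<cdot> l0" using compose_eq[OF KB(10)] R KB LB by simp
    also have "\<dots> = p2 \<cdot> (m \<cdot> l1)" using compose_eq[OF M(4)] LB(6) M R LB PB by simp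
    finally show "p2 \<cdot> (phi \<cdot> s') = p2 \<cdot> (m \<cdot> l1)" .
  qed (use S' PH M LB R in simp_all)
  have fb: "phi \<cdot> tb = m \<cdot> k1"
  proof (rule pb_ext[OF pb])
    have "p1 \<cdot> (phi \<cdot> tb) = d0 \<cdot> (l1 \<cdot> (\<epsilon> \<cdot> k0))"
      using compose_eq[OF PH(3)] compose_eq[OF T'(3)] T' PH M R KB LB XB PB by simp
    also have "\<dots> = d0 \<cdot> k0" using compose_eq[OF LB(10)] R KB LB by simp
    also have "\<dots> = p1 \<cdot> (m \<cdot> k1)" using compose_eq[OF M(3)] KB(6) M R KB PB by simp
    finally show "p1 \<cdot> (phi \<cdot> tb) = p1 \<cdot> (m \<cdot> k1)" .
    show "p2 \<cdot> (phi \<cdot> tb) = p2 \<cdot> (m \<cdot> k1)"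
      using compose_eq[OF PH(4)] compose_eq[OF M(4)] T' PH M R KB LB XB PB by simp
  qed (use T' PH M KB R in simp_all)
  have "\<exists>psi. dm psi = X' \<and> cd psi = dm m \<and> m \<cdot> psi = phi"
    by (rule jee_factor[OF fc J mono PH(1) _ _ _ fa _ _ fb]) (use PH M S' T' KB LB R in simp_all)
  then obtain D where D: "dm D = X'" "cd D = S" "m \<cdot> D = phi" using M by auto
  have D0: "d0 \<cdot> D = d0 \<cdot> (l1 \<cdot> f')"
    using compose_eq[OF M(3), of D] D M PH PB by simp
  have D1: "d1 \<cdot> D = d1 \<cdot> (k1 \<cdot> g')"
    using compose_eq[OF M(4), of D] D M PH PB by simp
  \<comment> \<open>difunctionality: elements a,b in L (d1 a = d1 b), a,q in K (d0 a = d0 q) give (d0 b) S (d1 q)\<close>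
  have dif: "\<exists>w. dm w = dm a \<and> cd w = S \<and> d0 \<cdot> w = d0 \<cdot> b \<and> d1 \<cdot> w = d1 \<cdot> q"
    if ab: "cd a = S" "cd b = S" "cd q = S" "dm a = dm b" "dm q = dm a" "d1 \<cdot> a = d1 \<cdot> b" "d0 \<cdot> a = d0 \<cdot> q"
    for a b q
  proof -
    define x where "x = pbp C l0 l1 a b"
    note Xx = pbp[OF LB(1), of a b, folded x_def]
    have Xx: "dm x = dm a" "cd x = L" "l0 \<cdot> x = a" "l1 \<cdot> x = b" using Xx ab R by auto
    define y where "y = pbp C k0 k1 a q"
    note Yy = pbp[OF KB(1), of a q, folded y_def]
    have Yy: "dm y = dm a" "cd y = K" "k0 \<cdot> y = a" "k1 \<cdot> y = q" using Yy ab R by auto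
    define z where "z = pbp C f' g' x y"
    note Zz = pbp[OF pbX, of x y, folded z_def]
    have Zz: "dm z = dm a" "cd z = X'" "f' \<cdot> z = x" "g' \<cdot> z = y" using Zz Xx Yy LB KB by auto
    have "d0 \<cdot> (D \<cdot> z) = d0 \<cdot> b"
      using compose_eq[OF D0] compose_eq[OF Zz(3)] Zz Xx D R LB XB by simp
    moreover have "d1 \<cdot> (D \<cdot> z) = d1 \<cdot> q"
      using compose_eq[OF D1] compose_eq[OF Zz(4)] Zz Yy D R KB XB by simp
    ultimately show ?thesis using D Zz by (intro exI[of _ "D \<cdot> z"]) auto
  qed
  obtain \<sigma> where \<sigma>: "dm \<sigma> = S" "cd \<sigma> = S" "d0 \<cdot> \<sigma> = d1" "d1 \<cdot> \<sigma> = d0"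
  proof -
    have "\<exists>w. dm w = dm (idm S) \<and> cd w = S \<and> d0 \<cdot> w = d0 \<cdot> (s0 \<cdot> d1) \<and> d1 \<cdot> w = d1 \<cdot> (s0 \<cdot> d0)"
      by (rule dif) (use R compose_eq[OF R(7)] compose_eq[OF R(8)] in auto)
    then show ?thesis using that R compose_eq[OF R(7)] compose_eq[OF R(8)] by auto
  qed
  have trans: "\<exists>\<tau>. hom C \<tau> P S \<and> d0 \<cdot> \<tau> = d0 \<cdot> p \<and> d1 \<cdot> \<tau> = d1 \<cdot> q" if pq: "is_pullback C d1 d0 P p q" for P p q
  proof -
    note QB = pb_basic[OF pq]
    have "\<exists>w. dm w = dm (s0 \<cdot> (d0 \<cdot> q)) \<and> cd w = S \<and> d0 \<cdot> w = d0 \<cdot> p \<and> d1 \<cdot> w = d1 \<cdot> q"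
      by (rule dif) (use R QB compose_eq[OF R(7)] compose_eq[OF R(8)] in auto)
    then show ?thesis using R QB unfolding hom_def by auto
  qed
  have "equiv_rel C X S d0 d1 s0" unfolding equiv_rel_def
    using r \<sigma> trans unfolding hom_def by blast
  then show ?thesis unfolding sigma_equiv_rel_def using sig by blast
qed

end

locale grpd = cctx C for C :: "('o,'m) cat" +
  fixes X0 X1 d0 d1 s0 P \<pi>1 \<pi>2 mu i
  assumes fc: "finitely_complete C"
    and rg: "refl_graph C X0 X1 d0 d1 s0"
    and pb: "is_pullback C d1 d0 P \<pi>1 \<pi>2"
    and mu: "hom C mu P X1" "Cmp C d0 mu = Cmp C d0 \<pi>1" "Cmp C d1 mu = Cmp C d1 \<pi>2"
    and inv: "hom C i X1 X1" "Cmp C d0 i = d1" "Cmp C d1 i = d0"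
    and u1: "\<forall>e. hom C e X1 P \<and> Cmp C \<pi>1 e = Cmp C s0 d0 \<and> Cmp C \<pi>2 e = Idm C X1
           \<longrightarrow> Cmp C mu e = Idm C X1"
    and u2: "\<forall>e. hom C e X1 P \<and> Cmp C \<pi>1 e = Idm C X1 \<and> Cmp C \<pi>2 e = Cmp C s0 d1
           \<longrightarrow> Cmp C mu e = Idm C X1"
    and i1: "\<forall>e. hom C e X1 P \<and> Cmp C \<pi>1 e = Idm C X1 \<and> Cmp C \<pi>2 e = i
           \<longrightarrow> Cmp C mu e = Cmp C s0 d0"
    and i2: "\<forall>e. hom C e X1 P \<and> Cmp C \<pi>1 e = i \<and> Cmp C \<pi>2 e = Idm C X1
           \<longrightarrow> Cmp C mu e = Cmp C s0 d1"
    and as: "\<forall>Q q1 q2 u v. is_pullback C \<pi>2 \<pi>1 Q q1 q2 \<and>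
           hom C u Q P \<and> Cmp C \<pi>1 u = Cmp C mu q1 \<and> Cmp C \<pi>2 u = Cmp C \<pi>2 q2 \<and>
           hom C v Q P \<and> Cmp C \<pi>1 v = Cmp C \<pi>1 q1 \<and> Cmp C \<pi>2 v = Cmp C mu q2
           \<longrightarrow> Cmp C mu u = Cmp C mu v"
begin

lemma RG: "dm d0 = X1" "cd d0 = X0" "dm d1 = X1" "cd d1 = X0" "dm s0 = X0" "cd s0 = X1"
    "d0 \<cdot> s0 = idm X0" "d1 \<cdot> s0 = idm X0"
  using rg unfolding refl_graph_def hom_def by auto

lemmas PB = pb_basic[OF pb]

lemma MU: "dm mu = P" "cd mu = X1" "dm i = X1" "cd i = X1"
  using mu inv unfolding hom_def by auto

definition cmp where "cmp a b = mu \<cdot> pbp C \<pi>1 \<pi>2 a b"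

lemma pr:
  assumes "cd a = X1" "cd b = X1" "dm a = dm b" "d1 \<cdot> a = d0 \<cdot> b"
  shows "dm (pbp C \<pi>1 \<pi>2 a b) = dm a" "cd (pbp C \<pi>1 \<pi>2 a b) = P"
    "\<pi>1 \<cdot> pbp C \<pi>1 \<pi>2 a b = a" "\<pi>2 \<cdot> pbp C \<pi>1 \<pi>2 a b = b"
  using pbp[OF pb, of a b] assms RG by auto

lemma cmp:
  assumes "cd a = X1" "cd b = X1" "dm a = dm b" "d1 \<cdot> a = d0 \<cdot> b"
  shows "dm (cmp a b) = dm a" "cd (cmp a b) = X1" "d0 \<cdot> cmp a b = d0 \<cdot> a" "d1 \<cdot> cmp a b = d1 \<cdot> b"
proof -
  note Q = pr[OF assms]
  show "dm (cmp a b) = dm a" "cd (cmp a b) = X1" unfolding cmp_def using Q MU by auto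
  show "d0 \<cdot> cmp a b = d0 \<cdot> a" unfolding cmp_def
    using compose_eq[OF mu(2)] compose_eq[OF Q(3)] Q MU PB RG by simp
  show "d1 \<cdot> cmp a b = d1 \<cdot> b" unfolding cmp_def
    using compose_eq[OF mu(3)] compose_eq[OF Q(4)] Q MU PB RG by simp
qed

lemma pr_nat:
  assumes "cd a = X1" "cd b = X1" "dm a = dm b" "d1 \<cdot> a = d0 \<cdot> b" "cd h = dm a"
  shows "pbp C \<pi>1 \<pi>2 a b \<cdot> h = pbp C \<pi>1 \<pi>2 (a \<cdot> h) (b \<cdot> h)"
  by (rule pbp_nat[OF pb]) (use assms RG in auto)

lemma cmp_nat:
  assumes "cd a = X1" "cd b = X1" "dm a = dm b" "d1 \<cdot> a = d0 \<cdot> b" "cd h = dm a"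
  shows "cmp a b \<cdot> h = cmp (a \<cdot> h) (b \<cdot> h)"
  unfolding cmp_def using pr_nat[OF assms] pr[OF assms(1-4)] assms MU by simp

lemma pr_eq:
  assumes "cd a = X1" "cd b = X1" "dm a = dm b" "d1 \<cdot> a = d0 \<cdot> b"
    and "cd e = P" "dm e = dm a" "\<pi>1 \<cdot> e = a" "\<pi>2 \<cdot> e = b"
  shows "pbp C \<pi>1 \<pi>2 a b = e"
  using pbp_unique[OF pb, of a b e] assms RG by auto

lemma unit_l:
  assumes a: "cd a = X1"
  shows "cmp (s0 \<cdot> (d0 \<cdot> a)) a = a"
proof -
  have c: "cd (s0 \<cdot> d0) = X1" "d1 \<cdot> (s0 \<cdot> d0) = d0 \<cdot> idm X1" using compose_eq[OF RG(8)] RG by auto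
  define e where "e = pbp C \<pi>1 \<pi>2 (s0 \<cdot> d0) (idm X1)"
  note E = pr[of "s0 \<cdot> d0" "idm X1", folded e_def]
  have E: "dm e = X1" "cd e = P" "\<pi>1 \<cdot> e = s0 \<cdot> d0" "\<pi>2 \<cdot> e = idm X1" using E c RG by auto
  have me: "mu \<cdot> e = idm X1" using u1 E unfolding hom_def by blast
  have "pbp C \<pi>1 \<pi>2 (s0 \<cdot> (d0 \<cdot> a)) a = e \<cdot> a"
    apply (rule pr_eq)
    using E a RG compose_eq[OF RG(8)] compose_eq[OF E(3)] compose_eq[OF E(4)] PB by simp_all
  then show ?thesis unfolding cmp_def using compose_eq[OF me] E a MU by simp
qed

lemma unit_r:
  assumes a: "cd a = X1"
  shows "cmp a (s0 \<cdot> (d1 \<cdot> a)) = a"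
proof -
  have c: "cd (s0 \<cdot> d1) = X1" "d1 \<cdot> idm X1 = d0 \<cdot> (s0 \<cdot> d1)" using compose_eq[OF RG(7)] RG by auto
  define e where "e = pbp C \<pi>1 \<pi>2 (idm X1) (s0 \<cdot> d1)"
  note E = pr[of "idm X1" "s0 \<cdot> d1", folded e_def]
  have E: "dm e = X1" "cd e = P" "\<pi>1 \<cdot> e = idm X1" "\<pi>2 \<cdot> e = s0 \<cdot> d1" using E c RG by auto
  have me: "mu \<cdot> e = idm X1" using u2 E unfolding hom_def by blast
  have "pbp C \<pi>1 \<pi>2 a (s0 \<cdot> (d1 \<cdot> a)) = e \<cdot> a"
    apply (rule pr_eq)
    using E a RG compose_eq[OF RG(7)] compose_eq[OF E(3)] compose_eq[OF E(4)] PB by simp_all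
  then show ?thesis unfolding cmp_def using compose_eq[OF me] E a MU by simp
qed

lemma inv_r:
  assumes a: "cd a = X1"
  shows "cmp a (i \<cdot> a) = s0 \<cdot> (d0 \<cdot> a)"
proof -
  have c: "d1 \<cdot> idm X1 = d0 \<cdot> i" using inv RG by auto
  define e where "e = pbp C \<pi>1 \<pi>2 (idm X1) i"
  note E = pr[of "idm X1" i, folded e_def]
  have E: "dm e = X1" "cd e = P" "\<pi>1 \<cdot> e = idm X1" "\<pi>2 \<cdot> e = i" using E c RG MU by auto
  have me: "mu \<cdot> e = s0 \<cdot> d0" using i1 E unfolding hom_def by blast
  have "pbp C \<pi>1 \<pi>2 a (i \<cdot> a) = e \<cdot> a"
    apply (rule pr_eq)
    using E a RG MU compose_eq[OF inv(2)] compose_eq[OF E(3)] compose_eq[OF E(4)] PB by simp_all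
  then show ?thesis unfolding cmp_def using compose_eq[OF me] E a MU RG by simp
qed

lemma inv_l:
  assumes a: "cd a = X1"
  shows "cmp (i \<cdot> a) a = s0 \<cdot> (d1 \<cdot> a)"
proof -
  have c: "d1 \<cdot> i = d0 \<cdot> idm X1" using inv RG by auto
  define e where "e = pbp C \<pi>1 \<pi>2 i (idm X1)"
  note E = pr[of i "idm X1", folded e_def]
  have E: "dm e = X1" "cd e = P" "\<pi>1 \<cdot> e = i" "\<pi>2 \<cdot> e = idm X1" using E c RG MU by auto
  have me: "mu \<cdot> e = s0 \<cdot> d1" using i2 E unfolding hom_def by blast
  have "pbp C \<pi>1 \<pi>2 (i \<cdot> a) a = e \<cdot> a"
    apply (rule pr_eq)
    using E a RG MU compose_eq[OF inv(3)] compose_eq[OF E(3)] compose_eq[OF E(4)] PB by simp_all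
  then show ?thesis unfolding cmp_def using compose_eq[OF me] E a MU RG by simp
qed

lemma assoc_g:
  assumes a: "cd a = X1" "cd b = X1" "cd c = X1" "dm b = dm a" "dm c = dm a"
    "d1 \<cdot> a = d0 \<cdot> b" "d1 \<cdot> b = d0 \<cdot> c"
  shows "cmp (cmp a b) c = cmp a (cmp b c)"
proof -
  obtain Q q1 q2 where pq: "is_pullback C \<pi>2 \<pi>1 Q q1 q2" using pb_exists[OF fc] PB RG by metis
  note QB = pb_basic[OF pq]
  have c1: "d1 \<cdot> (mu \<cdot> q1) = d0 \<cdot> (\<pi>2 \<cdot> q2)"
  proof -
    have "d1 \<cdot> (mu \<cdot> q1) = d1 \<cdot> (\<pi>2 \<cdot> q1)" by (rule ceq[OF mu(3)]) (use MU PB QB RG in simp_all)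
    also have "\<dots> = d1 \<cdot> (\<pi>1 \<cdot> q2)" using QB(5) by simp
    also have "\<dots> = d0 \<cdot> (\<pi>2 \<cdot> q2)" by (rule ceq[OF PB(5)]) (use MU PB QB RG in simp_all)
    finally show ?thesis .
  qed
  have c2: "d1 \<cdot> (\<pi>1 \<cdot> q1) = d0 \<cdot> (mu \<cdot> q2)"
  proof -
    have "d1 \<cdot> (\<pi>1 \<cdot> q1) = d0 \<cdot> (\<pi>2 \<cdot> q1)" by (rule ceq[OF PB(5)]) (use MU PB QB RG in simp_all)
    also have "\<dots> = d0 \<cdot> (\<pi>1 \<cdot> q2)" using QB(5) by simp
    also have "\<dots> = d0 \<cdot> (mu \<cdot> q2)" by (rule ceq[OF mu(2)[symmetric]]) (use MU PB QB RG in simp_all)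
    finally show ?thesis .
  qed
  define U where "U = pbp C \<pi>1 \<pi>2 (mu \<cdot> q1) (\<pi>2 \<cdot> q2)"
  note UU = pr[of "mu \<cdot> q1" "\<pi>2 \<cdot> q2", folded U_def]
  have UU: "dm U = Q" "cd U = P" "\<pi>1 \<cdot> U = mu \<cdot> q1" "\<pi>2 \<cdot> U = \<pi>2 \<cdot> q2"
    using UU c1 MU PB QB RG by auto
  define V where "V = pbp C \<pi>1 \<pi>2 (\<pi>1 \<cdot> q1) (mu \<cdot> q2)"
  note VV = pr[of "\<pi>1 \<cdot> q1" "mu \<cdot> q2", folded V_def]
  have VV: "dm V = Q" "cd V = P" "\<pi>1 \<cdot> V = \<pi>1 \<cdot> q1" "\<pi>2 \<cdot> V = mu \<cdot> q2"
    using VV c2 MU PB QB RG by auto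
  have muUV: "mu \<cdot> U = mu \<cdot> V" using as pq UU VV unfolding hom_def by blast
  note A = pr[of a b] and B = pr[of b c]
  have A: "dm (pbp C \<pi>1 \<pi>2 a b) = dm a" "cd (pbp C \<pi>1 \<pi>2 a b) = P"
    "\<pi>1 \<cdot> pbp C \<pi>1 \<pi>2 a b = a" "\<pi>2 \<cdot> pbp C \<pi>1 \<pi>2 a b = b" using A a RG by auto
  have B: "dm (pbp C \<pi>1 \<pi>2 b c) = dm a" "cd (pbp C \<pi>1 \<pi>2 b c) = P"
    "\<pi>1 \<cdot> pbp C \<pi>1 \<pi>2 b c = b" "\<pi>2 \<cdot> pbp C \<pi>1 \<pi>2 b c = c" using B a RG by auto
  define w where "w = pbp C q1 q2 (pbp C \<pi>1 \<pi>2 a b) (pbp C \<pi>1 \<pi>2 b c)"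
  note W = pbp[OF pq, of "pbp C \<pi>1 \<pi>2 a b" "pbp C \<pi>1 \<pi>2 b c", folded w_def]
  have W: "dm w = dm a" "cd w = Q" "q1 \<cdot> w = pbp C \<pi>1 \<pi>2 a b" "q2 \<cdot> w = pbp C \<pi>1 \<pi>2 b c"
    using W A B PB RG by auto
  note CA = cmp[of a b] and CB = cmp[of b c]
  have CA: "dm (cmp a b) = dm a" "cd (cmp a b) = X1" "d0 \<cdot> cmp a b = d0 \<cdot> a" "d1 \<cdot> cmp a b = d1 \<cdot> b"
    using CA a RG by auto
  have CB: "dm (cmp b c) = dm a" "cd (cmp b c) = X1" "d0 \<cdot> cmp b c = d0 \<cdot> b" "d1 \<cdot> cmp b c = d1 \<cdot> c"
    using CB a RG by auto
  have L: "pbp C \<pi>1 \<pi>2 (cmp a b) c = U \<cdot> w"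
    apply (rule pr_eq)
    using CA a UU W A B QB PB MU compose_eq[OF UU(3)] compose_eq[OF UU(4)]
    by (simp_all add: cmp_def compose_eq[OF W(3)] compose_eq[OF W(4)])
  have R: "pbp C \<pi>1 \<pi>2 a (cmp b c) = V \<cdot> w"
    apply (rule pr_eq)
    using CB a VV W A B QB PB MU compose_eq[OF VV(3)] compose_eq[OF VV(4)]
    by (simp_all add: cmp_def compose_eq[OF W(3)] compose_eq[OF W(4)])
  have "cmp (cmp a b) c = mu \<cdot> (U \<cdot> w)" unfolding cmp_def[of "cmp a b" c] using L by simp
  also have "\<dots> = mu \<cdot> (V \<cdot> w)" by (rule ceq[OF muUV]) (use UU VV W MU in simp_all)
  also have "\<dots> = cmp a (cmp b c)" unfolding cmp_def[of a "cmp b c"] using R by simp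
  finally show ?thesis .
qed

lemma cancel1:
  assumes "cd x = X1" "cd y = X1" "dm x = dm y" "d0 \<cdot> x = d0 \<cdot> y"
  shows "cmp x (cmp (i \<cdot> x) y) = y"
proof -
  have ix: "cd (i \<cdot> x) = X1" "dm (i \<cdot> x) = dm x" "d1 \<cdot> (i \<cdot> x) = d0 \<cdot> y" "d0 \<cdot> (i \<cdot> x) = d1 \<cdot> x"
    using assms MU compose_eq[OF inv(3)] compose_eq[OF inv(2)] RG by simp_all
  have "cmp x (cmp (i \<cdot> x) y) = cmp (cmp x (i \<cdot> x)) y"
    by (rule assoc_g[symmetric]) (use assms ix in simp_all)
  also have "\<dots> = cmp (s0 \<cdot> (d0 \<cdot> y)) y" using inv_r[OF assms(1)] assms by simp
  also have "\<dots> = y" by (rule unit_l[OF assms(2)])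
  finally show ?thesis .
qed

lemma cancel2:
  assumes "cd x = X1" "cd y = X1" "dm x = dm y" "d1 \<cdot> x = d0 \<cdot> y"
  shows "cmp (i \<cdot> x) (cmp x y) = y"
proof -
  have ix: "cd (i \<cdot> x) = X1" "dm (i \<cdot> x) = dm x" "d1 \<cdot> (i \<cdot> x) = d0 \<cdot> x" "d0 \<cdot> (i \<cdot> x) = d1 \<cdot> x"
    using assms MU compose_eq[OF inv(3)] compose_eq[OF inv(2)] RG by simp_all
  have "cmp (i \<cdot> x) (cmp x y) = cmp (cmp (i \<cdot> x) x) y"
    by (rule assoc_g[symmetric]) (use assms ix in simp_all)
  also have "\<dots> = cmp (s0 \<cdot> (d0 \<cdot> y)) y" using inv_l[OF assms(1)] assms by simp
  also have "\<dots> = y" by (rule unit_l[OF assms(2)])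
  finally show ?thesis .
qed

lemma grpd_kernel_sigma:
  assumes fib: "fibrational C Sig" and sig: "(d0, s0) \<in> Sig"
  shows "kernel_is_sigma_rel C Sig d0"
  unfolding kernel_is_sigma_rel_def
proof (intro allI impI)
  fix K k0 k1 \<delta> assume k: "kernel_rel C d0 K k0 k1 \<delta>"
  note KB = kernel_basic[OF k]
  have ik: "cd (i \<cdot> k0) = X1" "dm (i \<cdot> k0) = K" "d1 \<cdot> (i \<cdot> k0) = d0 \<cdot> k1" "d0 \<cdot> (i \<cdot> k0) = d1 \<cdot> k0"
    using KB MU compose_eq[OF inv(3)] compose_eq[OF inv(2)] RG by simp_all
  define c where "c = cmp (i \<cdot> k0) k1"
  note CC = cmp[of "i \<cdot> k0" k1, folded c_def]
  have CC: "dm c = K" "cd c = X1" "d0 \<cdot> c = d1 \<cdot> k0" "d1 \<cdot> c = d1 \<cdot> k1" using CC ik KB RG by simp_all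
  have cnat: "c \<cdot> h = cmp (i \<cdot> (k0 \<cdot> h)) (k1 \<cdot> h)" if "cd h = K" for h
    unfolding c_def using cmp_nat[of "i \<cdot> k0" k1 h] ik KB RG MU that by simp
  have pbK: "is_pullback C d1 d0 K k0 c"
  proof (rule is_pullbackI)
    fix a b assume ab: "cd a = dm d1" "cd b = dm d0" "dm a = dm b" "d1 \<cdot> a = d0 \<cdot> b"
    note T = cmp[of a b]
    have T: "dm (cmp a b) = dm a" "cd (cmp a b) = X1" "d0 \<cdot> cmp a b = d0 \<cdot> a" "d1 \<cdot> cmp a b = d1 \<cdot> b"
      using T ab RG by simp_all
    define u where "u = pbp C k0 k1 a (cmp a b)"
    note U = pbp[OF KB(1), of a "cmp a b", folded u_def]
    have U: "dm u = dm a" "cd u = K" "k0 \<cdot> u = a" "k1 \<cdot> u = cmp a b" using U ab RG T KB by simp_all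
    have "c \<cdot> u = cmp (i \<cdot> a) (cmp a b)" using cnat[OF U(2)] U by (simp add: compose_eq[OF U(3)])
    also have "\<dots> = b" by (rule cancel2) (use ab RG in simp_all)
    finally have cu: "c \<cdot> u = b" .
    show "\<exists>u. dm u = dm a \<and> cd u = K \<and> k0 \<cdot> u = a \<and> c \<cdot> u = b"
      using U cu by blast
  next
    have k1u: "k1 \<cdot> u = cmp (k0 \<cdot> u) (c \<cdot> u)" if "cd u = K" for u
    proof -
      have "cmp (k0 \<cdot> u) (c \<cdot> u) = cmp (k0 \<cdot> u) (cmp (i \<cdot> (k0 \<cdot> u)) (k1 \<cdot> u))"
        using cnat[OF that] by simp
      also have "\<dots> = k1 \<cdot> u" apply (rule cancel1) using that KB RG ceq[OF KB(6)] by simp_all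
      finally show ?thesis by simp
    qed
    fix u v assume uv: "cd u = K" "cd v = K" "dm u = dm v" "k0 \<cdot> u = k0 \<cdot> v" "c \<cdot> u = c \<cdot> v"
    have "k1 \<cdot> u = k1 \<cdot> v" using k1u[OF uv(1)] k1u[OF uv(2)] uv(4,5) by simp
    then show "u = v" using pb_ext[OF KB(1)] uv by simp
  qed (use RG KB CC in simp_all)
  have cd: "c \<cdot> \<delta> = s0 \<cdot> d1"
    using cnat[OF KB(8)] KB inv_l[of "idm X1"] RG MU by simp
  have "(k0, \<delta>) \<in> Sig"
    by (rule fibD[OF fib sig _ pbK]) (use RG KB CC cd in simp_all)
  then show "sigma_rel C Sig (dm d0) K k0 k1 \<delta>"
    unfolding sigma_rel_def using kernel_refl_rel[OF k] by blast
qed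

lemma grpd_commute: "kernels_commute C d0 d1"
  unfolding kernels_commute_def commutator_zero_def
proof (intro allI impI)
  fix K k0 k1 \<delta> L l0 l1 \<epsilon> PP pR pS \<sigma>R \<sigma>S
  assume kl: "kernel_rel C d0 K k0 k1 \<delta> \<and> kernel_rel C d1 L l0 l1 \<epsilon>"
  assume h: "is_pullback C k1 l0 PP pR pS \<and>
        hom C \<sigma>R K PP \<and> pR \<cdot> \<sigma>R = idm K \<and> pS \<cdot> \<sigma>R = \<epsilon> \<cdot> k1 \<and>
        hom C \<sigma>S L PP \<and> pR \<cdot> \<sigma>S = \<delta> \<cdot> l0 \<and> pS \<cdot> \<sigma>S = idm L"
  note KB = kernel_basic[of d0 K k0 k1 \<delta>] and LB = kernel_basic[of d1 L l0 l1 \<epsilon>]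
  have KB: "is_pullback C d0 d0 K k0 k1" "dm k0 = K" "dm k1 = K" "cd k0 = X1" "cd k1 = X1"
    "d0 \<cdot> k0 = d0 \<cdot> k1" "dm \<delta> = X1" "cd \<delta> = K" "k0 \<cdot> \<delta> = idm X1" "k1 \<cdot> \<delta> = idm X1"
    using KB kl RG by auto
  have LB: "is_pullback C d1 d1 L l0 l1" "dm l0 = L" "dm l1 = L" "cd l0 = X1" "cd l1 = X1"
    "d1 \<cdot> l0 = d1 \<cdot> l1" "dm \<epsilon> = X1" "cd \<epsilon> = L" "l0 \<cdot> \<epsilon> = idm X1" "l1 \<cdot> \<epsilon> = idm X1"
    using LB kl RG by auto
  have pbP: "is_pullback C k1 l0 PP pR pS" using h by blast
  note PB2 = pb_basic[OF pbP]
  have SR: "dm \<sigma>R = K" "cd \<sigma>R = PP" "pR \<cdot> \<sigma>R = idm K" "pS \<cdot> \<sigma>R = \<epsilon> \<cdot> k1"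
    and SS: "dm \<sigma>S = L" "cd \<sigma>S = PP" "pR \<cdot> \<sigma>S = \<delta> \<cdot> l0" "pS \<cdot> \<sigma>S = idm L"
    using h unfolding hom_def by auto
  define a where "a = k0 \<cdot> pR"
  define b where "b = k1 \<cdot> pR"
  define c where "c = l1 \<cdot> pS"
  have abc: "cd a = X1" "cd b = X1" "cd c = X1" "dm a = PP" "dm b = PP" "dm c = PP"
    unfolding a_def b_def c_def using KB LB PB2 by simp_all
  have e1: "d1 \<cdot> c = d1 \<cdot> b"
  proof -
    have "d1 \<cdot> c = d1 \<cdot> (l0 \<cdot> pS)" unfolding c_def by (rule ceq[OF LB(6)[symmetric]]) (use LB PB2 RG in simp_all)
    also have "\<dots> = d1 \<cdot> b" unfolding b_def using PB2(5) by simp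
    finally show ?thesis .
  qed
  have e2: "d0 \<cdot> b = d0 \<cdot> a" unfolding a_def b_def
    by (rule ceq[OF KB(6)[symmetric]]) (use KB PB2 RG in simp_all)
  have ib: "cd (i \<cdot> b) = X1" "dm (i \<cdot> b) = PP" "d0 \<cdot> (i \<cdot> b) = d1 \<cdot> b" "d1 \<cdot> (i \<cdot> b) = d0 \<cdot> b"
    using abc MU compose_eq[OF inv(2)] compose_eq[OF inv(3)] RG by simp_all
  note C1 = cmp[of c "i \<cdot> b"]
  have C1: "dm (cmp c (i \<cdot> b)) = PP" "cd (cmp c (i \<cdot> b)) = X1" "d1 \<cdot> cmp c (i \<cdot> b) = d0 \<cdot> a"
    using C1 abc ib e1 e2 by simp_all
  define p where "p = cmp (cmp c (i \<cdot> b)) a"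
  note PP = cmp[of "cmp c (i \<cdot> b)" a, folded p_def]
  have PP: "dm p = PP" "cd p = X1" using PP C1 abc by simp_all
  have pnat: "p \<cdot> h = cmp (cmp (c \<cdot> h) (i \<cdot> (b \<cdot> h))) (a \<cdot> h)" if "cd h = PP" for h
  proof -
    have "p \<cdot> h = cmp (cmp c (i \<cdot> b) \<cdot> h) (a \<cdot> h)" unfolding p_def
      by (rule cmp_nat) (use C1 abc that in simp_all)
    also have "cmp c (i \<cdot> b) \<cdot> h = cmp (c \<cdot> h) ((i \<cdot> b) \<cdot> h)"
      by (rule cmp_nat) (use ib abc that e1 in simp_all)
    finally show ?thesis using ib abc MU that by simp
  qed
  have aR: "a \<cdot> \<sigma>R = k0" unfolding a_def using SR KB PB2(1-4) by (simp add: compose_eq[OF SR(3)])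
  have bR: "b \<cdot> \<sigma>R = k1" unfolding b_def using SR KB PB2(1-4) by (simp add: compose_eq[OF SR(3)])
  have cR: "c \<cdot> \<sigma>R = k1" unfolding c_def using SR KB LB PB2(1-4) compose_eq[OF LB(10)]
    by (simp add: compose_eq[OF SR(4)])
  have aS: "a \<cdot> \<sigma>S = l0" unfolding a_def using SS KB LB PB2(1-4) compose_eq[OF KB(9)]
    by (simp add: compose_eq[OF SS(3)])
  have bS: "b \<cdot> \<sigma>S = l0" unfolding b_def using SS KB LB PB2(1-4) compose_eq[OF KB(10)]
    by (simp add: compose_eq[OF SS(3)])
  have cS: "c \<cdot> \<sigma>S = l1" unfolding c_def using SS KB LB PB2(1-4) by (simp add: compose_eq[OF SS(4)])
  have "p \<cdot> \<sigma>R = cmp (cmp k1 (i \<cdot> k1)) k0" using pnat[OF SR(2)] aR bR cR by simp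
  also have "\<dots> = cmp (s0 \<cdot> (d0 \<cdot> k0)) k0" using inv_r[OF KB(5)] KB(6) by simp
  also have "\<dots> = k0" by (rule unit_l[OF KB(4)])
  finally have pR: "p \<cdot> \<sigma>R = k0" .
  have "p \<cdot> \<sigma>S = cmp (cmp l1 (i \<cdot> l0)) l0" using pnat[OF SS(2)] aS bS cS by simp
  also have "\<dots> = cmp l1 (cmp (i \<cdot> l0) l0)"
    by (rule assoc_g) (use LB MU RG compose_eq[OF inv(2)] compose_eq[OF inv(3)] in simp_all)
  also have "\<dots> = cmp l1 (s0 \<cdot> (d1 \<cdot> l1))" using inv_l[OF LB(4)] LB(6) by simp
  also have "\<dots> = l1" by (rule unit_r[OF LB(5)])
  finally have pS: "p \<cdot> \<sigma>S = l1" .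
  show "\<exists>p. hom C p PP (dm d0) \<and> p \<cdot> \<sigma>R = k0 \<and> p \<cdot> \<sigma>S = l1"
    using PP pR pS RG unfolding hom_def by auto
qed

end

locale pre = cctx C for C :: "('o,'m) cat" +
  fixes Sig X0 X1 d0 d1 s0 K k0 k1 \<delta> L l0 l1 \<epsilon> PP pR pS p
  assumes fc: "finitely_complete C" and fib: "fibrational C Sig" and mal: "sigma_maltsev C Sig"
    and rg: "refl_graph C X0 X1 d0 d1 s0"
    and k: "kernel_rel C d0 K k0 k1 \<delta>" and l: "kernel_rel C d1 L l0 l1 \<epsilon>"
    and ks: "kernel_is_sigma_rel C Sig d0"
    and pbP: "is_pullback C k1 l0 PP pR pS"
    and p: "dm p = PP" "cd p = X1"
      "Cmp C p (pbp C pR pS (idm K) (Cmp C \<epsilon> k1)) = k0"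
      "Cmp C p (pbp C pR pS (Cmp C \<delta> l0) (idm L)) = l1"
begin

lemma RG: "dm d0 = X1" "cd d0 = X0" "dm d1 = X1" "cd d1 = X0" "dm s0 = X0" "cd s0 = X1"
    "d0 \<cdot> s0 = idm X0" "d1 \<cdot> s0 = idm X0"
  using rg unfolding refl_graph_def hom_def by auto

lemma KB: "is_pullback C d0 d0 K k0 k1" "dm k0 = K" "dm k1 = K" "cd k0 = X1" "cd k1 = X1"
    "d0 \<cdot> k0 = d0 \<cdot> k1" "dm \<delta> = X1" "cd \<delta> = K" "k0 \<cdot> \<delta> = idm X1" "k1 \<cdot> \<delta> = idm X1"
  using kernel_basic[OF k] RG by auto

lemma LB: "is_pullback C d1 d1 L l0 l1" "dm l0 = L" "dm l1 = L" "cd l0 = X1" "cd l1 = X1"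
    "d1 \<cdot> l0 = d1 \<cdot> l1" "dm \<epsilon> = X1" "cd \<epsilon> = L" "l0 \<cdot> \<epsilon> = idm X1" "l1 \<cdot> \<epsilon> = idm X1"
  using kernel_basic[OF l] RG by auto

lemmas PB = pb_basic[OF pbP]

definition "\<sigma>R = pbp C pR pS (idm K) (\<epsilon> \<cdot> k1)"
definition "\<sigma>S = pbp C pR pS (\<delta> \<cdot> l0) (idm L)"

lemma SR: "dm \<sigma>R = K" "cd \<sigma>R = PP" "pR \<cdot> \<sigma>R = idm K" "pS \<cdot> \<sigma>R = \<epsilon> \<cdot> k1" "p \<cdot> \<sigma>R = k0"
proof -
  have e: "l0 \<cdot> (\<epsilon> \<cdot> k1) = k1" using compose_eq[OF LB(9)] KB LB by simp
  show "dm \<sigma>R = K" "cd \<sigma>R = PP" "pR \<cdot> \<sigma>R = idm K" "pS \<cdot> \<sigma>R = \<epsilon> \<cdot> k1"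
    unfolding \<sigma>R_def using pbp[OF pbP, of "idm K" "\<epsilon> \<cdot> k1"] e KB LB by simp_all
  show "p \<cdot> \<sigma>R = k0" unfolding \<sigma>R_def by (rule p(3))
qed

lemma SS: "dm \<sigma>S = L" "cd \<sigma>S = PP" "pR \<cdot> \<sigma>S = \<delta> \<cdot> l0" "pS \<cdot> \<sigma>S = idm L" "p \<cdot> \<sigma>S = l1"
proof -
  have e: "k1 \<cdot> (\<delta> \<cdot> l0) = l0" using compose_eq[OF KB(10)] KB LB by simp
  show "dm \<sigma>S = L" "cd \<sigma>S = PP" "pR \<cdot> \<sigma>S = \<delta> \<cdot> l0" "pS \<cdot> \<sigma>S = idm L"
    unfolding \<sigma>S_def using pbp[OF pbP, of "\<delta> \<cdot> l0" "idm L"] e KB LB by simp_all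
  show "p \<cdot> \<sigma>S = l1" unfolding \<sigma>S_def by (rule p(4))
qed

lemma k1sig: "(k1, \<delta>) \<in> Sig"
  using ks kernel_swap[OF k] unfolding kernel_is_sigma_rel_def sigma_rel_def RG by blast

lemma k0sig: "(k0, \<delta>) \<in> Sig"
  using ks k unfolding kernel_is_sigma_rel_def sigma_rel_def RG by blast

lemma J: "jointly_extremally_epic C \<sigma>S \<sigma>R PP"
proof -
  have j: "jointly_extremally_epic C (pbp C pS pR (idm (dm l0)) (\<delta> \<cdot> l0)) (pbp C pS pR (\<epsilon> \<cdot> k1) (idm (dm k1))) PP"
    by (rule maltsev_jee[OF mal fib k1sig _ _ _ _ pb_sym[OF pbP]]) (use LB KB in simp_all)
  have e1: "pbp C pS pR (idm (dm l0)) (\<delta> \<cdot> l0) = \<sigma>S"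
    by (rule pbp_unique[OF pb_sym[OF pbP], symmetric]) (use SS LB KB PB compose_eq[OF KB(10)] in simp_all)
  have e2: "pbp C pS pR (\<epsilon> \<cdot> k1) (idm (dm k1)) = \<sigma>R"
    by (rule pbp_unique[OF pb_sym[OF pbP], symmetric]) (use SR LB KB PB compose_eq[OF LB(9)] in simp_all)
  show ?thesis using j unfolding e1 e2 .
qed

lemma pd0: "d0 \<cdot> p = d0 \<cdot> (l1 \<cdot> pS)"
  apply (rule jee_eq[OF fc J])
  using p RG PB LB SR SS compose_eq[OF SR(4)] compose_eq[OF SS(4)] compose_eq[OF LB(10)]
    compose_eq[OF SS(5)] compose_eq[OF SR(5)] KB
  by simp_all

lemma pd1: "d1 \<cdot> p = d1 \<cdot> (k0 \<cdot> pR)"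
  apply (rule jee_eq[OF fc J])
  using p RG PB LB SR SS compose_eq[OF SR(3)] compose_eq[OF SS(3)] compose_eq[OF KB(9)]
    compose_eq[OF SS(5)] compose_eq[OF SR(5)] KB
  by simp_all

end

context pre begin

definition "kp a b = pbp C k0 k1 a b"
definition "lp a b = pbp C l0 l1 a b"
definition "tri a b c = pbp C pR pS (kp a b) (lp b c)"
definition "pp a b c = p \<cdot> tri a b c"

lemma kp:
  assumes "cd a = X1" "cd b = X1" "dm b = dm a" "d0 \<cdot> a = d0 \<cdot> b"
  shows "dm (kp a b) = dm a" "cd (kp a b) = K" "k0 \<cdot> kp a b = a" "k1 \<cdot> kp a b = b"
  unfolding kp_def using pbp[OF KB(1), of a b] assms RG by simp_all

lemma lp:
  assumes "cd b = X1" "cd c = X1" "dm c = dm b" "d1 \<cdot> b = d1 \<cdot> c"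
  shows "dm (lp b c) = dm b" "cd (lp b c) = L" "l0 \<cdot> lp b c = b" "l1 \<cdot> lp b c = c"
  unfolding lp_def using pbp[OF LB(1), of b c] assms RG by simp_all

lemma tri:
  assumes "cd a = X1" "cd b = X1" "cd c = X1" "dm b = dm a" "dm c = dm a"
    "d0 \<cdot> a = d0 \<cdot> b" "d1 \<cdot> b = d1 \<cdot> c"
  shows "dm (tri a b c) = dm a" "cd (tri a b c) = PP" "pR \<cdot> tri a b c = kp a b" "pS \<cdot> tri a b c = lp b c"
proof -
  note K = kp[OF assms(1,2,4,6)] and Lq = lp[OF assms(2,3) _ assms(7)]
  have Lq: "dm (lp b c) = dm a" "cd (lp b c) = L" "l0 \<cdot> lp b c = b" "l1 \<cdot> lp b c = c"
    using Lq assms by simp_all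
  show "dm (tri a b c) = dm a" "cd (tri a b c) = PP" "pR \<cdot> tri a b c = kp a b" "pS \<cdot> tri a b c = lp b c"
    unfolding tri_def using pbp[OF pbP, of "kp a b" "lp b c"] K Lq KB LB by simp_all
qed

lemma pp:
  assumes "cd a = X1" "cd b = X1" "cd c = X1" "dm b = dm a" "dm c = dm a"
    "d0 \<cdot> a = d0 \<cdot> b" "d1 \<cdot> b = d1 \<cdot> c"
  shows "dm (pp a b c) = dm a" "cd (pp a b c) = X1" "d0 \<cdot> pp a b c = d0 \<cdot> c" "d1 \<cdot> pp a b c = d1 \<cdot> a"
proof -
  note T = tri[OF assms]
  note K = kp[OF assms(1,2,4,6)] and Lq = lp[OF assms(2,3) _ assms(7)]
  show "dm (pp a b c) = dm a" "cd (pp a b c) = X1" unfolding pp_def using T p by simp_all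
  show "d0 \<cdot> pp a b c = d0 \<cdot> c" unfolding pp_def
    using compose_eq[OF pd0] compose_eq[OF T(4)] T p PB LB RG Lq assms by simp
  show "d1 \<cdot> pp a b c = d1 \<cdot> a" unfolding pp_def
    using compose_eq[OF pd1] compose_eq[OF T(3)] T p PB KB RG K assms by simp
qed

lemma tri_nat:
  assumes "cd a = X1" "cd b = X1" "cd c = X1" "dm b = dm a" "dm c = dm a"
    "d0 \<cdot> a = d0 \<cdot> b" "d1 \<cdot> b = d1 \<cdot> c" "cd h = dm a"
  shows "tri a b c \<cdot> h = tri (a \<cdot> h) (b \<cdot> h) (c \<cdot> h)"
proof -
  note K = kp[OF assms(1,2,4,6)] and Lq = lp[OF assms(2,3) _ assms(7)]
  have kn: "kp a b \<cdot> h = kp (a \<cdot> h) (b \<cdot> h)" unfolding kp_def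
    by (rule pbp_nat[OF KB(1)]) (use assms RG in simp_all)
  have ln: "lp b c \<cdot> h = lp (b \<cdot> h) (c \<cdot> h)" unfolding lp_def
    by (rule pbp_nat[OF LB(1)]) (use assms RG in simp_all)
  have "tri a b c \<cdot> h = pbp C pR pS (kp a b \<cdot> h) (lp b c \<cdot> h)" unfolding tri_def
    by (rule pbp_nat[OF pbP]) (use assms K Lq KB LB in simp_all)
  then show ?thesis unfolding tri_def kn ln .
qed

lemma pp_nat:
  assumes "cd a = X1" "cd b = X1" "cd c = X1" "dm b = dm a" "dm c = dm a"
    "d0 \<cdot> a = d0 \<cdot> b" "d1 \<cdot> b = d1 \<cdot> c" "cd h = dm a"
  shows "pp a b c \<cdot> h = pp (a \<cdot> h) (b \<cdot> h) (c \<cdot> h)"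
  unfolding pp_def using tri_nat[OF assms] tri[OF assms(1-7)] p assms by simp

lemma ppR:
  assumes "cd a = X1" "cd b = X1" "dm b = dm a" "d0 \<cdot> a = d0 \<cdot> b"
  shows "pp a b b = a"
proof -
  note K = kp[OF assms]
  have lb: "lp b b = \<epsilon> \<cdot> b" unfolding lp_def
    by (rule pbp_unique[OF LB(1), symmetric]) (use assms LB RG compose_eq[OF LB(9)] compose_eq[OF LB(10)] in simp_all)
  have "tri a b b = \<sigma>R \<cdot> kp a b" unfolding tri_def
    apply (rule pbp_unique[OF pbP, symmetric])
    using assms K SR KB LB PB compose_eq[OF SR(3)] compose_eq[OF SR(4)] lb compose_eq[OF LB(9)] by simp_all
  then show ?thesis unfolding pp_def using compose_eq[OF SR(5)] K SR p by simp
qed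

lemma ppS:
  assumes "cd b = X1" "cd c = X1" "dm c = dm b" "d1 \<cdot> b = d1 \<cdot> c"
  shows "pp b b c = c"
proof -
  note Lq = lp[OF assms]
  have kb: "kp b b = \<delta> \<cdot> b" unfolding kp_def
    by (rule pbp_unique[OF KB(1), symmetric]) (use assms KB RG compose_eq[OF KB(9)] compose_eq[OF KB(10)] in simp_all)
  have "tri b b c = \<sigma>S \<cdot> lp b c" unfolding tri_def
    apply (rule pbp_unique[OF pbP, symmetric])
    using assms Lq SS KB LB PB compose_eq[OF SS(3)] compose_eq[OF SS(4)] kb compose_eq[OF KB(10)] by simp_all
  then show ?thesis unfolding pp_def using compose_eq[OF SS(5)] Lq SS p by simp
qed

end

context pre begin

lemma L3:
  assumes c: "cd a = X1" "cd b = X1" "cd c = X1" "cd e = X1" "cd f = X1"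
    "dm b = dm a" "dm c = dm a" "dm e = dm a" "dm f = dm a"
    "d0 \<cdot> a = d0 \<cdot> b" "d1 \<cdot> b = d1 \<cdot> c" "d0 \<cdot> c = d0 \<cdot> e" "d1 \<cdot> e = d1 \<cdot> f"
  shows "pp a b (pp c e f) = pp (pp a b c) e f"
proof -
  \<comment> \<open>the object Y of quadruples (b,c,e,f)\<close>
  have cdk: "cd (k0 \<cdot> pR) = X1" using KB PB by simp
  obtain Y y1 y2 where pY: "is_pullback C l1 (k0 \<cdot> pR) Y y1 y2" using pb_exists[OF fc] LB cdk by metis
  note YB = pb_basic[OF pY]
  have YB: "dm y1 = Y" "dm y2 = Y" "cd y1 = L" "cd y2 = PP" "l1 \<cdot> y1 = k0 \<cdot> (pR \<cdot> y2)"
    using YB LB KB PB by simp_all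
  define g where "g = l0 \<cdot> y1"
  have g: "dm g = Y" "cd g = X1" unfolding g_def using YB LB by simp_all
  have et: "k0 \<cdot> (pR \<cdot> (\<sigma>R \<cdot> \<delta>)) = idm X1" using compose_eq[OF SR(3)] SR KB LB PB by simp
  define t where "t = pbp C y1 y2 \<epsilon> (\<sigma>R \<cdot> \<delta>)"
  note TT = pbp[OF pY, of \<epsilon> "\<sigma>R \<cdot> \<delta>", folded t_def]
  have T: "dm t = X1" "cd t = Y" "y1 \<cdot> t = \<epsilon>" "y2 \<cdot> t = \<sigma>R \<cdot> \<delta>" using TT et LB KB SR PB by simp_all
  have gt: "g \<cdot> t = idm X1" unfolding g_def using compose_eq[OF T(3)] T YB LB by simp
  obtain X'' f' g' where pX: "is_pullback C g k1 X'' f' g'" using pb_exists[OF fc] g KB by metis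
  note XB = pb_basic[OF pX]
  have XB: "dm f' = X''" "dm g' = X''" "cd f' = Y" "cd g' = K" "g \<cdot> f' = k1 \<cdot> g'"
    using XB g KB by simp_all
  define s' where "s' = pbp C f' g' (idm (dm g)) (\<delta> \<cdot> g)"
  define tb where "tb = pbp C f' g' (t \<cdot> k1) (idm (dm k1))"
  have JJ: "jointly_extremally_epic C s' tb X''" unfolding s'_def tb_def
    by (rule maltsev_jee[OF mal fib k1sig _ _ _ _ pX]) (use T g KB gt in simp_all)
  have e1: "k1 \<cdot> (\<delta> \<cdot> g) = g" using compose_eq[OF KB(10)] g KB by simp
  have e2: "g \<cdot> (t \<cdot> k1) = k1" using compose_eq[OF gt] T g KB by simp
  note S' = pbp[OF pX, of "idm (dm g)" "\<delta> \<cdot> g", folded s'_def]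
  have S': "dm s' = Y" "cd s' = X''" "f' \<cdot> s' = idm Y" "g' \<cdot> s' = \<delta> \<cdot> g" using S' g KB e1 by simp_all
  note T' = pbp[OF pX, of "t \<cdot> k1" "idm (dm k1)", folded tb_def]
  have T': "dm tb = K" "cd tb = X''" "f' \<cdot> tb = t \<cdot> k1" "g' \<cdot> tb = idm K" using T' g KB T e2 by simp_all
  define A where "A = k0 \<cdot> g'"
  define B where "B = k1 \<cdot> g'"
  define Cc where "Cc = l1 \<cdot> (y1 \<cdot> f')"
  define E where "E = k1 \<cdot> (pR \<cdot> (y2 \<cdot> f'))"
  define F where "F = l1 \<cdot> (pS \<cdot> (y2 \<cdot> f'))"
  have gen: "cd A = X1" "cd B = X1" "cd Cc = X1" "cd E = X1" "cd F = X1"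
    "dm A = X''" "dm B = X''" "dm Cc = X''" "dm E = X''" "dm F = X''"
    unfolding A_def B_def Cc_def E_def F_def using KB LB PB YB XB by simp_all
  have B': "B = l0 \<cdot> (y1 \<cdot> f')" unfolding B_def using XB g_def YB LB by simp
  have gAB: "d0 \<cdot> A = d0 \<cdot> B" unfolding A_def B_def
    by (rule ceq[OF KB(6)]) (use KB XB RG in simp_all)
  have gBC: "d1 \<cdot> B = d1 \<cdot> Cc" unfolding B' Cc_def
    by (rule ceq[OF LB(6)]) (use LB XB YB RG in simp_all)
  have C': "Cc = k0 \<cdot> (pR \<cdot> (y2 \<cdot> f'))" unfolding Cc_def using compose_eq[OF YB(5)] YB XB LB KB PB by simp
  have gCE: "d0 \<cdot> Cc = d0 \<cdot> E" unfolding C' E_def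
    by (rule ceq[OF KB(6)]) (use KB XB YB PB RG in simp_all)
  have E': "E = l0 \<cdot> (pS \<cdot> (y2 \<cdot> f'))" unfolding E_def using compose_eq[OF PB(5)] PB YB XB KB LB by simp
  have gEF: "d1 \<cdot> E = d1 \<cdot> F" unfolding E' F_def
    by (rule ceq[OF LB(6)]) (use LB XB YB PB RG in simp_all)
  note PCEF = pp[of Cc E F] and PABC = pp[of A B Cc]
  have PCEF: "dm (pp Cc E F) = X''" "cd (pp Cc E F) = X1" "d1 \<cdot> pp Cc E F = d1 \<cdot> Cc" "d0 \<cdot> pp Cc E F = d0 \<cdot> F"
    using PCEF gen gCE gEF by simp_all
  have PABC: "dm (pp A B Cc) = X''" "cd (pp A B Cc) = X1" "d0 \<cdot> pp A B Cc = d0 \<cdot> Cc"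
    using PABC gen gAB gBC by simp_all
  define LHS where "LHS = pp A B (pp Cc E F)"
  define RHS where "RHS = pp (pp A B Cc) E F"
  have LR: "LHS = RHS"
  proof (rule jee_eq[OF fc JJ])
    show "dm LHS = X''" "dm RHS = X''" "cd LHS = cd RHS" unfolding LHS_def RHS_def
      using pp[of A B "pp Cc E F"] pp[of "pp A B Cc" E F] gen PCEF PABC gAB gBC gCE gEF by simp_all
  next
    have As: "A \<cdot> s' = g" unfolding A_def using compose_eq[OF S'(4)] compose_eq[OF KB(9)] S' XB KB g by simp
    have Bs: "B \<cdot> s' = g" unfolding B_def using compose_eq[OF S'(4)] compose_eq[OF KB(10)] S' XB KB g by simp
    have Cs: "Cc \<cdot> s' = l1 \<cdot> y1" unfolding Cc_def using compose_eq[OF S'(3)] S' XB YB LB by simp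
    have Es: "E \<cdot> s' = k1 \<cdot> (pR \<cdot> y2)" unfolding E_def using compose_eq[OF S'(3)] S' XB YB PB KB by simp
    have Fs: "F \<cdot> s' = l1 \<cdot> (pS \<cdot> y2)" unfolding F_def using compose_eq[OF S'(3)] S' XB YB PB LB by simp
    have yc: "d0 \<cdot> (l1 \<cdot> y1) = d0 \<cdot> (k1 \<cdot> (pR \<cdot> y2))"
      using compose_eq[OF YB(5)] ceq[OF KB(6), of "pR \<cdot> y2"] YB PB KB LB RG by simp
    have ye: "d1 \<cdot> (k1 \<cdot> (pR \<cdot> y2)) = d1 \<cdot> (l1 \<cdot> (pS \<cdot> y2))"
      using ceq[OF PB(5), of y2] ceq[OF LB(6), of "pS \<cdot> y2"] YB PB KB LB RG by simp
    have gc: "d1 \<cdot> g = d1 \<cdot> (l1 \<cdot> y1)" unfolding g_def by (rule ceq[OF LB(6)]) (use LB YB RG in simp_all)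
    have cc: "cd (l1 \<cdot> y1) = X1" "cd (k1 \<cdot> (pR \<cdot> y2)) = X1" "cd (l1 \<cdot> (pS \<cdot> y2)) = X1"
      "dm (l1 \<cdot> y1) = Y" "dm (k1 \<cdot> (pR \<cdot> y2)) = Y" "dm (l1 \<cdot> (pS \<cdot> y2)) = Y"
      using YB PB KB LB by simp_all
    note P3 = pp[of "l1 \<cdot> y1" "k1 \<cdot> (pR \<cdot> y2)" "l1 \<cdot> (pS \<cdot> y2)"]
    have P3: "dm (pp (l1 \<cdot> y1) (k1 \<cdot> (pR \<cdot> y2)) (l1 \<cdot> (pS \<cdot> y2))) = Y"
       "cd (pp (l1 \<cdot> y1) (k1 \<cdot> (pR \<cdot> y2)) (l1 \<cdot> (pS \<cdot> y2))) = X1"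
       "d1 \<cdot> pp (l1 \<cdot> y1) (k1 \<cdot> (pR \<cdot> y2)) (l1 \<cdot> (pS \<cdot> y2)) = d1 \<cdot> (l1 \<cdot> y1)"
      using P3 cc yc ye by simp_all
    have "LHS \<cdot> s' = pp (A \<cdot> s') (B \<cdot> s') (pp Cc E F \<cdot> s')" unfolding LHS_def
      by (rule pp_nat) (use gen PCEF gAB gBC S' in simp_all)
    also have "pp Cc E F \<cdot> s' = pp (Cc \<cdot> s') (E \<cdot> s') (F \<cdot> s')"
      by (rule pp_nat) (use gen gCE gEF S' in simp_all)
    finally have "LHS \<cdot> s' = pp g g (pp (l1 \<cdot> y1) (k1 \<cdot> (pR \<cdot> y2)) (l1 \<cdot> (pS \<cdot> y2)))"
      unfolding As Bs Cs Es Fs .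
    also have "\<dots> = pp (l1 \<cdot> y1) (k1 \<cdot> (pR \<cdot> y2)) (l1 \<cdot> (pS \<cdot> y2))"
      by (rule ppS) (use g P3 gc in simp_all)
    finally have L1: "LHS \<cdot> s' = pp (l1 \<cdot> y1) (k1 \<cdot> (pR \<cdot> y2)) (l1 \<cdot> (pS \<cdot> y2))" .
    have "RHS \<cdot> s' = pp (pp A B Cc \<cdot> s') (E \<cdot> s') (F \<cdot> s')" unfolding RHS_def
      by (rule pp_nat) (use gen PABC gCE gEF S' in simp_all)
    also have "pp A B Cc \<cdot> s' = pp (A \<cdot> s') (B \<cdot> s') (Cc \<cdot> s')"
      by (rule pp_nat) (use gen gAB gBC S' in simp_all)
    finally have "RHS \<cdot> s' = pp (pp g g (l1 \<cdot> y1)) (k1 \<cdot> (pR \<cdot> y2)) (l1 \<cdot> (pS \<cdot> y2))"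
      unfolding As Bs Cs Es Fs .
    also have "pp g g (l1 \<cdot> y1) = l1 \<cdot> y1" by (rule ppS) (use g cc gc in simp_all)
    finally show "LHS \<cdot> s' = RHS \<cdot> s'" using L1 by simp
  next
    have At: "A \<cdot> tb = k0" unfolding A_def using compose_eq[OF T'(4)] T' XB KB by simp
    have Bt: "B \<cdot> tb = k1" unfolding B_def using compose_eq[OF T'(4)] T' XB KB by simp
    have y1t: "y1 \<cdot> (t \<cdot> k1) = \<epsilon> \<cdot> k1" using compose_eq[OF T(3)] T YB KB by simp
    have y2t: "y2 \<cdot> (t \<cdot> k1) = \<sigma>R \<cdot> (\<delta> \<cdot> k1)" using compose_eq[OF T(4)] T YB KB SR by simp
    have Ct: "Cc \<cdot> tb = k1" unfolding Cc_def
      using compose_eq[OF T'(3)] T' XB YB LB y1t compose_eq[OF LB(10)] T KB by simp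
    have Et: "E \<cdot> tb = k1" unfolding E_def
      using compose_eq[OF T'(3)] T' XB YB PB KB y2t compose_eq[OF SR(3)] SR compose_eq[OF KB(10)] T by simp
    have Ft: "F \<cdot> tb = k1" unfolding F_def
      using compose_eq[OF T'(3)] T' XB YB PB KB LB y2t compose_eq[OF SR(4)] SR compose_eq[OF KB(10)]
        compose_eq[OF LB(10)] T by simp
    have kk: "pp k0 k1 k1 = k0" by (rule ppR) (use KB in simp_all)
    have k3: "pp k1 k1 k1 = k1" by (rule ppS) (use KB in simp_all)
    have "LHS \<cdot> tb = pp (A \<cdot> tb) (B \<cdot> tb) (pp Cc E F \<cdot> tb)" unfolding LHS_def
      by (rule pp_nat) (use gen PCEF gAB gBC T' in simp_all)
    also have "pp Cc E F \<cdot> tb = pp (Cc \<cdot> tb) (E \<cdot> tb) (F \<cdot> tb)"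
      by (rule pp_nat) (use gen gCE gEF T' in simp_all)
    finally have L1: "LHS \<cdot> tb = k0" unfolding At Bt Ct Et Ft k3 kk .
    have "RHS \<cdot> tb = pp (pp A B Cc \<cdot> tb) (E \<cdot> tb) (F \<cdot> tb)" unfolding RHS_def
      by (rule pp_nat) (use gen PABC gCE gEF T' in simp_all)
    also have "pp A B Cc \<cdot> tb = pp (A \<cdot> tb) (B \<cdot> tb) (Cc \<cdot> tb)"
      by (rule pp_nat) (use gen gAB gBC T' in simp_all)
    finally have "RHS \<cdot> tb = k0" unfolding At Bt Ct Et Ft kk .
    then show "LHS \<cdot> tb = RHS \<cdot> tb" using L1 by simp
  qed
  note LP = lp[of b c] and TR = tri[of c e f] and KP = kp[of a b]
  have LP: "dm (lp b c) = dm a" "cd (lp b c) = L" "l0 \<cdot> lp b c = b" "l1 \<cdot> lp b c = c" using LP c by simp_all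
  have TR: "dm (tri c e f) = dm a" "cd (tri c e f) = PP" "pR \<cdot> tri c e f = kp c e" "pS \<cdot> tri c e f = lp e f"
    using TR c by simp_all
  have KP: "dm (kp a b) = dm a" "cd (kp a b) = K" "k0 \<cdot> kp a b = a" "k1 \<cdot> kp a b = b" using KP c by simp_all
  note KP2 = kp[of c e] and LP2 = lp[of e f]
  have KP2: "k0 \<cdot> kp c e = c" "k1 \<cdot> kp c e = e" using KP2 c by simp_all
  have LP2: "l1 \<cdot> lp e f = f" using LP2 c by simp_all
  have ycond: "l1 \<cdot> lp b c = (k0 \<cdot> pR) \<cdot> tri c e f" using LP TR KP2 KB PB by simp
  define yy where "yy = pbp C y1 y2 (lp b c) (tri c e f)"
  note YY = pbp[OF pY, of "lp b c" "tri c e f", folded yy_def]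
  have YY: "dm yy = dm a" "cd yy = Y" "y1 \<cdot> yy = lp b c" "y2 \<cdot> yy = tri c e f"
    using YY ycond LP TR LB KB PB KP2 by simp_all
  have hcond: "g \<cdot> yy = k1 \<cdot> kp a b" unfolding g_def using compose_eq[OF YY(3)] YY YB LB LP KP by simp
  define hh where "hh = pbp C f' g' yy (kp a b)"
  note HH = pbp[OF pX, of yy "kp a b", folded hh_def]
  have HH: "dm hh = dm a" "cd hh = X''" "f' \<cdot> hh = yy" "g' \<cdot> hh = kp a b"
    using HH hcond YY KP g KB by simp_all
  have Ah: "A \<cdot> hh = a" unfolding A_def using compose_eq[OF HH(4)] HH XB KB KP by simp
  have Bh: "B \<cdot> hh = b" unfolding B_def using compose_eq[OF HH(4)] HH XB KB KP by simp
  have Ch: "Cc \<cdot> hh = c" unfolding Cc_def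
    using compose_eq[OF HH(3)] compose_eq[OF YY(3)] HH XB YB YY LB LP by simp
  have Eh: "E \<cdot> hh = e" unfolding E_def
    using compose_eq[OF HH(3)] compose_eq[OF YY(4)] compose_eq[OF TR(3)] HH XB YB YY KB PB TR KP2 by simp
  have Fh: "F \<cdot> hh = f" unfolding F_def
    using compose_eq[OF HH(3)] compose_eq[OF YY(4)] compose_eq[OF TR(4)] HH XB YB YY LB PB TR LP2 by simp
  have "LHS \<cdot> hh = pp (A \<cdot> hh) (B \<cdot> hh) (pp Cc E F \<cdot> hh)" unfolding LHS_def
    by (rule pp_nat) (use gen PCEF gAB gBC HH in simp_all)
  also have "pp Cc E F \<cdot> hh = pp (Cc \<cdot> hh) (E \<cdot> hh) (F \<cdot> hh)"
    by (rule pp_nat) (use gen gCE gEF HH in simp_all)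
  finally have L1: "LHS \<cdot> hh = pp a b (pp c e f)" unfolding Ah Bh Ch Eh Fh .
  have "RHS \<cdot> hh = pp (pp A B Cc \<cdot> hh) (E \<cdot> hh) (F \<cdot> hh)" unfolding RHS_def
    by (rule pp_nat) (use gen PABC gCE gEF HH in simp_all)
  also have "pp A B Cc \<cdot> hh = pp (A \<cdot> hh) (B \<cdot> hh) (Cc \<cdot> hh)"
    by (rule pp_nat) (use gen gAB gBC HH in simp_all)
  finally have R1: "RHS \<cdot> hh = pp (pp a b c) e f" unfolding Ah Bh Ch Eh Fh .
  show ?thesis using L1 R1 LR by simp
qed

end

context pre begin

lemma L1:
  assumes "cd a = X1" "cd b = X1" "cd c = X1" "cd e = X1"
    "dm b = dm a" "dm c = dm a" "dm e = dm a"
    "d0 \<cdot> a = d0 \<cdot> b" "d1 \<cdot> b = d1 \<cdot> c" "d1 \<cdot> c = d1 \<cdot> e"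
  shows "pp (pp a b c) c e = pp a b e"
proof -
  have "pp (pp a b c) c e = pp a b (pp c c e)" by (rule L3[symmetric]) (use assms in simp_all)
  also have "pp c c e = e" by (rule ppS) (use assms in simp_all)
  finally show ?thesis .
qed

lemma L2:
  assumes "cd a = X1" "cd b = X1" "cd c = X1" "cd e = X1"
    "dm b = dm a" "dm c = dm a" "dm e = dm a"
    "d0 \<cdot> a = d0 \<cdot> b" "d0 \<cdot> b = d0 \<cdot> c" "d1 \<cdot> c = d1 \<cdot> e"
  shows "pp a b (pp b c e) = pp a c e"
proof -
  have "pp a b (pp b c e) = pp (pp a b b) c e" by (rule L3) (use assms in simp_all)
  also have "pp a b b = a" by (rule ppR) (use assms in simp_all)
  finally show ?thesis .
qed

lemma pre_groupoid: "is_groupoid C X0 X1 d0 d1 s0"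
proof -
  obtain P \<pi>1 \<pi>2 where pb: "is_pullback C d1 d0 P \<pi>1 \<pi>2" using pb_exists[OF fc] RG by metis
  note QB = pb_basic[OF pb]
  have Q: "dm \<pi>1 = P" "dm \<pi>2 = P" "cd \<pi>1 = X1" "cd \<pi>2 = X1" "d1 \<cdot> \<pi>1 = d0 \<cdot> \<pi>2" using QB RG by simp_all
  have sd: "d1 \<cdot> (s0 \<cdot> h) = h" "d0 \<cdot> (s0 \<cdot> h) = h" if "cd h = X0" for h
    using compose_eq[OF RG(8)] compose_eq[OF RG(7)] RG that by simp_all
  define mu where "mu = pp \<pi>2 (s0 \<cdot> (d1 \<cdot> \<pi>1)) \<pi>1"
  have sd1: "d0 \<cdot> (s0 \<cdot> (d1 \<cdot> \<pi>1)) = d1 \<cdot> \<pi>1" "d1 \<cdot> (s0 \<cdot> (d1 \<cdot> \<pi>1)) = d1 \<cdot> \<pi>1"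
    using sd[of "d1 \<cdot> \<pi>1"] Q(1-4) RG by simp_all
  have mc: "d0 \<cdot> \<pi>2 = d0 \<cdot> (s0 \<cdot> (d1 \<cdot> \<pi>1))" "d1 \<cdot> (s0 \<cdot> (d1 \<cdot> \<pi>1)) = d1 \<cdot> \<pi>1"
    using sd1 Q(5) by metis+
  note MU = pp[of \<pi>2 "s0 \<cdot> (d1 \<cdot> \<pi>1)" \<pi>1, folded mu_def]
  have MU: "dm mu = P" "cd mu = X1" "d0 \<cdot> mu = d0 \<cdot> \<pi>1" "d1 \<cdot> mu = d1 \<cdot> \<pi>2"
    using MU mc Q(1-4) RG by simp_all
  have mun: "mu \<cdot> e = pp (\<pi>2 \<cdot> e) (s0 \<cdot> (d1 \<cdot> (\<pi>1 \<cdot> e))) (\<pi>1 \<cdot> e)" if "cd e = P" for e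
    unfolding mu_def using pp_nat[of \<pi>2 "s0 \<cdot> (d1 \<cdot> \<pi>1)" \<pi>1 e] mc Q(1-4) RG that by simp
  define i where "i = pp (s0 \<cdot> d0) (idm X1) (s0 \<cdot> d1)"
  have ic: "d0 \<cdot> (s0 \<cdot> d0) = d0" "d1 \<cdot> (s0 \<cdot> d1) = d1" "d1 \<cdot> (s0 \<cdot> d0) = d0" "d0 \<cdot> (s0 \<cdot> d1) = d1"
    using sd RG by simp_all
  note II = pp[of "s0 \<cdot> d0" "idm X1" "s0 \<cdot> d1", folded i_def]
  have II: "dm i = X1" "cd i = X1" "d0 \<cdot> i = d1" "d1 \<cdot> i = d0" using II ic RG by simp_all
  have hom1: "hom C e X1 P \<Longrightarrow> dm e = X1 \<and> cd e = P" for e unfolding hom_def by simp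
  show ?thesis unfolding is_groupoid_def
  proof (intro conjI exI)
    show "refl_graph C X0 X1 d0 d1 s0" by (rule rg)
    show "is_pullback C d1 d0 P \<pi>1 \<pi>2" by (rule pb)
    show "hom C mu P X1" "d0 \<cdot> mu = d0 \<cdot> \<pi>1" "d1 \<cdot> mu = d1 \<cdot> \<pi>2" "hom C i X1 X1" "d0 \<cdot> i = d1" "d1 \<cdot> i = d0"
      using MU II unfolding hom_def by simp_all
    show "\<forall>e. hom C e X1 P \<and> \<pi>1 \<cdot> e = s0 \<cdot> d0 \<and> \<pi>2 \<cdot> e = idm X1 \<longrightarrow> mu \<cdot> e = idm X1"
    proof (intro allI impI)
      fix e assume h: "hom C e X1 P \<and> \<pi>1 \<cdot> e = s0 \<cdot> d0 \<and> \<pi>2 \<cdot> e = idm X1"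
      then have "mu \<cdot> e = pp (idm X1) (s0 \<cdot> d0) (s0 \<cdot> d0)" using mun[of e] ic RG unfolding hom_def by simp
      also have "\<dots> = idm X1" by (rule ppR) (use ic RG in simp_all)
      finally show "mu \<cdot> e = idm X1" .
    qed
    show "\<forall>e. hom C e X1 P \<and> \<pi>1 \<cdot> e = idm X1 \<and> \<pi>2 \<cdot> e = s0 \<cdot> d1 \<longrightarrow> mu \<cdot> e = idm X1"
    proof (intro allI impI)
      fix e assume h: "hom C e X1 P \<and> \<pi>1 \<cdot> e = idm X1 \<and> \<pi>2 \<cdot> e = s0 \<cdot> d1"
      then have "mu \<cdot> e = pp (s0 \<cdot> d1) (s0 \<cdot> d1) (idm X1)" using mun[of e] ic RG unfolding hom_def by simp
      also have "\<dots> = idm X1" by (rule ppS) (use ic RG in simp_all)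
      finally show "mu \<cdot> e = idm X1" .
    qed
    show "\<forall>e. hom C e X1 P \<and> \<pi>1 \<cdot> e = idm X1 \<and> \<pi>2 \<cdot> e = i \<longrightarrow> mu \<cdot> e = s0 \<cdot> d0"
    proof (intro allI impI)
      fix e assume h: "hom C e X1 P \<and> \<pi>1 \<cdot> e = idm X1 \<and> \<pi>2 \<cdot> e = i"
      then have "mu \<cdot> e = pp i (s0 \<cdot> d1) (idm X1)" using mun[of e] ic RG unfolding hom_def by simp
      also have "\<dots> = pp (s0 \<cdot> d0) (idm X1) (idm X1)" unfolding i_def by (rule L1) (use ic RG in simp_all)
      also have "\<dots> = s0 \<cdot> d0" by (rule ppR) (use ic RG in simp_all)
      finally show "mu \<cdot> e = s0 \<cdot> d0" .
    qed
    show "\<forall>e. hom C e X1 P \<and> \<pi>1 \<cdot> e = i \<and> \<pi>2 \<cdot> e = idm X1 \<longrightarrow> mu \<cdot> e = s0 \<cdot> d1"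
    proof (intro allI impI)
      fix e assume h: "hom C e X1 P \<and> \<pi>1 \<cdot> e = i \<and> \<pi>2 \<cdot> e = idm X1"
      then have "mu \<cdot> e = pp (idm X1) (s0 \<cdot> d0) i" using mun[of e] II RG unfolding hom_def by simp
      also have "\<dots> = pp (idm X1) (idm X1) (s0 \<cdot> d1)" unfolding i_def by (rule L2) (use ic RG in simp_all)
      also have "\<dots> = s0 \<cdot> d1" by (rule ppS) (use ic RG in simp_all)
      finally show "mu \<cdot> e = s0 \<cdot> d1" .
    qed
    show "\<forall>Q q1 q2 u v. is_pullback C \<pi>2 \<pi>1 Q q1 q2 \<and>
           hom C u Q P \<and> \<pi>1 \<cdot> u = mu \<cdot> q1 \<and> \<pi>2 \<cdot> u = \<pi>2 \<cdot> q2 \<and>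
           hom C v Q P \<and> \<pi>1 \<cdot> v = \<pi>1 \<cdot> q1 \<and> \<pi>2 \<cdot> v = mu \<cdot> q2
           \<longrightarrow> mu \<cdot> u = mu \<cdot> v"
    proof (intro allI impI)
      fix Qo q1 q2 u v
      assume h: "is_pullback C \<pi>2 \<pi>1 Qo q1 q2 \<and>
           hom C u Qo P \<and> \<pi>1 \<cdot> u = mu \<cdot> q1 \<and> \<pi>2 \<cdot> u = \<pi>2 \<cdot> q2 \<and>
           hom C v Qo P \<and> \<pi>1 \<cdot> v = \<pi>1 \<cdot> q1 \<and> \<pi>2 \<cdot> v = mu \<cdot> q2"
      have pq: "is_pullback C \<pi>2 \<pi>1 Qo q1 q2" using h by blast
      note PB2 = pb_basic[OF pq]
      have q: "dm q1 = Qo" "dm q2 = Qo" "cd q1 = P" "cd q2 = P" "\<pi>2 \<cdot> q1 = \<pi>1 \<cdot> q2" using PB2 Q(1-4) by simp_all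
      have uv: "dm u = Qo" "cd u = P" "\<pi>1 \<cdot> u = mu \<cdot> q1" "\<pi>2 \<cdot> u = \<pi>2 \<cdot> q2"
         "dm v = Qo" "cd v = P" "\<pi>1 \<cdot> v = \<pi>1 \<cdot> q1" "\<pi>2 \<cdot> v = mu \<cdot> q2" using h unfolding hom_def by simp_all
      define f where "f = \<pi>1 \<cdot> q1"
      define g where "g = \<pi>1 \<cdot> q2"
      define hh where "hh = \<pi>2 \<cdot> q2"
      have g': "\<pi>2 \<cdot> q1 = g" unfolding g_def by (rule q(5))
      have el: "cd f = X1" "cd g = X1" "cd hh = X1" "dm f = Qo" "dm g = Qo" "dm hh = Qo"
        unfolding f_def g_def hh_def using q Q(1-4) by simp_all
      have fg: "d1 \<cdot> f = d0 \<cdot> g"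
      proof -
        have "d1 \<cdot> f = d0 \<cdot> (\<pi>2 \<cdot> q1)" unfolding f_def by (rule ceq[OF Q(5)]) (use Q(1-4) q RG in simp_all)
        then show ?thesis using g' by simp
      qed
      have gh: "d1 \<cdot> g = d0 \<cdot> hh" unfolding g_def hh_def by (rule ceq[OF Q(5)]) (use Q(1-4) q RG in simp_all)
      have m1: "mu \<cdot> q1 = pp g (s0 \<cdot> (d1 \<cdot> f)) f" using mun[OF q(3)] g' unfolding f_def by simp
      have m2: "mu \<cdot> q2 = pp hh (s0 \<cdot> (d1 \<cdot> g)) g" using mun[OF q(4)] unfolding g_def hh_def by simp
      have s1: "cd (s0 \<cdot> (d1 \<cdot> f)) = X1" "dm (s0 \<cdot> (d1 \<cdot> f)) = Qo" "d0 \<cdot> (s0 \<cdot> (d1 \<cdot> f)) = d1 \<cdot> f"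
          "d1 \<cdot> (s0 \<cdot> (d1 \<cdot> f)) = d1 \<cdot> f"
        using sd[of "d1 \<cdot> f"] el RG by simp_all
      have s2: "cd (s0 \<cdot> (d1 \<cdot> g)) = X1" "dm (s0 \<cdot> (d1 \<cdot> g)) = Qo" "d0 \<cdot> (s0 \<cdot> (d1 \<cdot> g)) = d1 \<cdot> g"
          "d1 \<cdot> (s0 \<cdot> (d1 \<cdot> g)) = d1 \<cdot> g"
        using sd[of "d1 \<cdot> g"] el RG by simp_all
      have c1: "d0 \<cdot> g = d0 \<cdot> (s0 \<cdot> (d1 \<cdot> f))" using s1(3) fg by metis
      have c2: "d0 \<cdot> hh = d0 \<cdot> (s0 \<cdot> (d1 \<cdot> g))" using s2(3) gh by metis
      note P1 = pp[OF el(2) s1(1) el(1) _ _ c1 s1(4)]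
      note P2 = pp[OF el(3) s2(1) el(2) _ _ c2 s2(4)]
      have P1: "cd (pp g (s0 \<cdot> (d1 \<cdot> f)) f) = X1" "dm (pp g (s0 \<cdot> (d1 \<cdot> f)) f) = Qo"
        "d1 \<cdot> pp g (s0 \<cdot> (d1 \<cdot> f)) f = d1 \<cdot> g" "d0 \<cdot> pp g (s0 \<cdot> (d1 \<cdot> f)) f = d0 \<cdot> f"
        using P1 el s1(2) by simp_all
      have P2: "cd (pp hh (s0 \<cdot> (d1 \<cdot> g)) g) = X1" "dm (pp hh (s0 \<cdot> (d1 \<cdot> g)) g) = Qo"
        "d0 \<cdot> pp hh (s0 \<cdot> (d1 \<cdot> g)) g = d0 \<cdot> g"
        using P2 el s2(2) by simp_all
      have "mu \<cdot> u = pp hh (s0 \<cdot> (d1 \<cdot> (mu \<cdot> q1))) (mu \<cdot> q1)"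
        using mun[OF uv(2)] uv unfolding hh_def by simp
      also have "\<dots> = pp hh (s0 \<cdot> (d1 \<cdot> g)) (pp g (s0 \<cdot> (d1 \<cdot> f)) f)" using m1 P1 by simp
      also have "\<dots> = pp (pp hh (s0 \<cdot> (d1 \<cdot> g)) g) (s0 \<cdot> (d1 \<cdot> f)) f"
        by (rule L3[OF el(3) s2(1) el(2) s1(1) el(1) _ _ _ _ c2 s2(4) c1 s1(4)]) (use el s1(2) s2(2) in simp_all)
      also have "\<dots> = mu \<cdot> v"
        using mun[OF uv(6)] uv m2 unfolding f_def by simp
      finally show "mu \<cdot> u = mu \<cdot> v" .
    qed
  qed
qed

end

context cctx begin

lemma part1_bwd:
  assumes fc: "finitely_complete C" and fib: "fibrational C Sig" and mal: "sigma_maltsev C Sig"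
    and rg: "refl_graph C X0 X1 d0 d1 s0" and ks: "kernel_is_sigma_rel C Sig d0"
    and kc: "kernels_commute C d0 d1"
  shows "sigma_groupoid C Sig X0 X1 d0 d1 s0"
proof -
  have RG: "dm d0 = X1" "cd d0 = X0" "dm d1 = X1" "cd d1 = X0" "dm s0 = X0" "cd s0 = X1"
    "d0 \<cdot> s0 = idm X0" "d1 \<cdot> s0 = idm X0"
    using rg unfolding refl_graph_def hom_def by auto
  obtain K k0 k1 \<delta> where k: "kernel_rel C d0 K k0 k1 \<delta>" using kernel_exists[OF fc] by blast
  obtain L l0 l1 \<epsilon> where l: "kernel_rel C d1 L l0 l1 \<epsilon>" using kernel_exists[OF fc] by blast
  have KB: "is_pullback C d0 d0 K k0 k1" "dm k0 = K" "dm k1 = K" "cd k0 = X1" "cd k1 = X1"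
    "d0 \<cdot> k0 = d0 \<cdot> k1" "dm \<delta> = X1" "cd \<delta> = K" "k0 \<cdot> \<delta> = idm X1" "k1 \<cdot> \<delta> = idm X1"
    using kernel_basic[OF k] RG by auto
  have LB: "is_pullback C d1 d1 L l0 l1" "dm l0 = L" "dm l1 = L" "cd l0 = X1" "cd l1 = X1"
    "d1 \<cdot> l0 = d1 \<cdot> l1" "dm \<epsilon> = X1" "cd \<epsilon> = L" "l0 \<cdot> \<epsilon> = idm X1" "l1 \<cdot> \<epsilon> = idm X1"
    using kernel_basic[OF l] RG by auto
  obtain PP pR pS where pbP: "is_pullback C k1 l0 PP pR pS" using pb_exists[OF fc] KB LB by metis
  note PB = pb_basic[OF pbP]
  have e1: "l0 \<cdot> (\<epsilon> \<cdot> k1) = k1" using compose_eq[OF LB(9)] KB LB by simp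
  have e2: "k1 \<cdot> (\<delta> \<cdot> l0) = l0" using compose_eq[OF KB(10)] KB LB by simp
  note SR = pbp[OF pbP, of "idm K" "\<epsilon> \<cdot> k1"] and SS = pbp[OF pbP, of "\<delta> \<cdot> l0" "idm L"]
  have SR: "dm (pbp C pR pS (idm K) (\<epsilon> \<cdot> k1)) = K" "cd (pbp C pR pS (idm K) (\<epsilon> \<cdot> k1)) = PP"
    "pR \<cdot> pbp C pR pS (idm K) (\<epsilon> \<cdot> k1) = idm K" "pS \<cdot> pbp C pR pS (idm K) (\<epsilon> \<cdot> k1) = \<epsilon> \<cdot> k1"
    using SR e1 KB LB by simp_all
  have SS: "dm (pbp C pR pS (\<delta> \<cdot> l0) (idm L)) = L" "cd (pbp C pR pS (\<delta> \<cdot> l0) (idm L)) = PP"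
    "pR \<cdot> pbp C pR pS (\<delta> \<cdot> l0) (idm L) = \<delta> \<cdot> l0" "pS \<cdot> pbp C pR pS (\<delta> \<cdot> l0) (idm L) = idm L"
    using SS e2 KB LB by simp_all
  have cz: "commutator_zero C (dm d0) K k0 k1 \<delta> L l0 l1 \<epsilon>"
    using kc k l unfolding kernels_commute_def by blast
  have "\<exists>p. hom C p PP (dm d0) \<and> p \<cdot> pbp C pR pS (idm K) (\<epsilon> \<cdot> k1) = k0 \<and> p \<cdot> pbp C pR pS (\<delta> \<cdot> l0) (idm L) = l1"
    using cz pbP SR SS KB LB unfolding commutator_zero_def hom_def by blast
  then obtain p where p: "dm p = PP" "cd p = X1" "p \<cdot> pbp C pR pS (idm K) (\<epsilon> \<cdot> k1) = k0"
    "p \<cdot> pbp C pR pS (\<delta> \<cdot> l0) (idm L) = l1" using RG unfolding hom_def by blast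
  interpret P: pre C Sig X0 X1 d0 d1 s0 K k0 k1 \<delta> L l0 l1 \<epsilon> PP pR pS p
    by unfold_locales (use fc fib mal rg k l ks pbP p in auto)
  have k0s: "(k0, \<delta>) \<in> Sig" using ks k unfolding kernel_is_sigma_rel_def sigma_rel_def by blast
  have "(d0, s0) \<in> Sig" by (rule sig_from_kernel[OF fib k k0s]) (use RG in simp_all)
  then show ?thesis unfolding sigma_groupoid_def using P.pre_groupoid by blast
qed

lemma part1_fwd:
  assumes fc: "finitely_complete C" and fib: "fibrational C Sig"
    and sg: "sigma_groupoid C Sig X0 X1 d0 d1 s0"
  shows "kernel_is_sigma_rel C Sig d0 \<and> kernels_commute C d0 d1"
proof -
  have sig: "(d0, s0) \<in> Sig" and g: "is_groupoid C X0 X1 d0 d1 s0"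
    using sg unfolding sigma_groupoid_def by blast+
  have rg: "refl_graph C X0 X1 d0 d1 s0" using g unfolding is_groupoid_def by blast
  obtain P \<pi>1 \<pi>2 mu i where G: "is_pullback C d1 d0 P \<pi>1 \<pi>2 \<and>
        hom C mu P X1 \<and> Cmp C d0 mu = Cmp C d0 \<pi>1 \<and> Cmp C d1 mu = Cmp C d1 \<pi>2 \<and>
        hom C i X1 X1 \<and> Cmp C d0 i = d1 \<and> Cmp C d1 i = d0 \<and>
        (\<forall>e. hom C e X1 P \<and> Cmp C \<pi>1 e = Cmp C s0 d0 \<and> Cmp C \<pi>2 e = Idm C X1
           \<longrightarrow> Cmp C mu e = Idm C X1) \<and>
        (\<forall>e. hom C e X1 P \<and> Cmp C \<pi>1 e = Idm C X1 \<and> Cmp C \<pi>2 e = Cmp C s0 d1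
           \<longrightarrow> Cmp C mu e = Idm C X1) \<and>
        (\<forall>e. hom C e X1 P \<and> Cmp C \<pi>1 e = Idm C X1 \<and> Cmp C \<pi>2 e = i
           \<longrightarrow> Cmp C mu e = Cmp C s0 d0) \<and>
        (\<forall>e. hom C e X1 P \<and> Cmp C \<pi>1 e = i \<and> Cmp C \<pi>2 e = Idm C X1
           \<longrightarrow> Cmp C mu e = Cmp C s0 d1) \<and>
        (\<forall>Q q1 q2 u v. is_pullback C \<pi>2 \<pi>1 Q q1 q2 \<and>
           hom C u Q P \<and> Cmp C \<pi>1 u = Cmp C mu q1 \<and> Cmp C \<pi>2 u = Cmp C \<pi>2 q2 \<and>
           hom C v Q P \<and> Cmp C \<pi>1 v = Cmp C \<pi>1 q1 \<and> Cmp C \<pi>2 v = Cmp C mu q2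
           \<longrightarrow> Cmp C mu u = Cmp C mu v)"
    using g unfolding is_groupoid_def by blast
  interpret G: grpd C X0 X1 d0 d1 s0 P \<pi>1 \<pi>2 mu i
    apply unfold_locales
    using fc rg G by blast+
  show ?thesis using G.grpd_kernel_sigma[OF fib sig] G.grpd_commute by blast
qed

end

theorem proposition3p11:
  fixes C :: "('o, 'm) cat" and Sig :: "('m \<times> 'm) set"
  assumes "category C" and "finitely_complete C" and "fibrational C Sig"
    and "sigma_maltsev C Sig"
  shows "(\<forall>X0 X1 d0 d1 s0. refl_graph C X0 X1 d0 d1 s0 \<longrightarrow>
            (sigma_groupoid C Sig X0 X1 d0 d1 s0 \<longleftrightarrow>
             kernel_is_sigma_rel C Sig d0 \<and> kernels_commute C d0 d1)) \<and>
         (\<forall>X S d0 d1 s0. refl_rel C X S d0 d1 s0 \<longrightarrow>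
            (sigma_equiv_rel C Sig X S d0 d1 s0 \<longleftrightarrow> kernel_is_sigma_rel C Sig d0))"
proof -
  interpret cctx C by unfold_locales (rule assms(1))
  have A: "sigma_groupoid C Sig X0 X1 d0 d1 s0 \<longleftrightarrow>
             kernel_is_sigma_rel C Sig d0 \<and> kernels_commute C d0 d1"
    if "refl_graph C X0 X1 d0 d1 s0" for X0 X1 d0 d1 s0
    using part1_fwd[OF assms(2,3)] part1_bwd[OF assms(2,3,4) that] by blast
  have B: "sigma_equiv_rel C Sig X S d0 d1 s0 \<longleftrightarrow> kernel_is_sigma_rel C Sig d0"
    if "refl_rel C X S d0 d1 s0" for X S d0 d1 s0
    using part2_fwd[OF assms(2,3) that] part2_bwd[OF assms(2,3,4) that] by blast
  show ?thesis using A B by blast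
qed

end
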